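(* Let $\mathcal{X}\subset\mathbb{R}^n$ be open, connected and bounded, let $1\le m<n$, and let $\{(x_i,u_i,\dot{x}_i)\}_{i=1}^{N}\subset \mathcal{X}\times\mathbb{R}^m\times\mathbb{R}^n$ be a training dataset. Let $X_c=\{x_1,\ldots,x_{N_c}\}\subset\mathcal{X}$ be a finite constraint set containing all the training states $x_i$, $i=1,\ldots,N$. Let $K^f$ and $K^B$ be $\mathcal{C}^2$ operator-valued positive definite kernels on $\mathcal{X}\times\mathcal{X}$ with associated $\mathbb{R}^n$-valued RKHSs $\mathcal{H}_K^f$ and $\mathcal{H}_K^B$, and define the finite-dimensional subspaces $$\mathcal{V}_f=\Big\{\sum_{i=1}^{N_c}K^f_{x_i}a_i+\sum_{i=1}^{N_c}\sum_{p=1}^n\partial_pK^f_{x_i}a'_{ip}\ :\ a_i,a'_{ip}\in\mathbb{R}^n\Big\}\subset\mathcal{H}_K^f,$$ $$\mathcal{V}_B=\Big\{\sum_{i=1}^{N_c}K^B_{x_i}c_i+\sum_{i=1}^{N_c}\sum_{p=1}^n\partial_pK^B_{x_i}c'_{ip}\ :\ c_i,c'_{ip}\in\mathbb{R}^n\Big\}\subset\mathcal{H}_K^B.$$ Suppose the kernel $K^B$ is chosen such that every $g\in\mathcal{H}_K^B$ satisfies $g^j(x)=0$ for $j=1,\ldots,n-m$ and all $x$. Fix $\lambda>0$, $\mu_f,\mu_b>0$, and a fixed differentiable symmetric-matrix-valued function $W:\mathcal{X}\to\mathbb{S}_n$. Consider the problem $$\min_{\hat f\in\mathcal{H}_K^f,\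 \hat b_j\in\mathcal{H}_K^B,\ j=1,\ldots,m}\ J_d(\hat f,\hat B)\quad\text{s.t.}\quad \mathcal{F}_\lambda(x_i;\hat f,W)\preceq 0\ \ \forall x_i\in X_c,$$ where $\hat B=(\hat b_1,\ldots,\hat b_m)$, $$J_d(\hat f,\hat B)=\sum_{i=1}^N\big\|\hat f(x_i)+\hat B(x_i)u_i-\dot x_i\big\|^2+\mu_f\|\hat f\|^2_{\mathcal{H}_K^f}+\mu_b\sum_{j=1}^m\|\hat b_j\|^2_{\mathcal{H}_K^B},$$ and $$\mathcal{F}_\lambda(x;\hat f,W)=\hat B_\perp^T\Big(-\partial_{\hat f}W(x)+\tfrac{\partial\hat f(x)}{\partial x}W(x)+\big(\tfrac{\partial\hat f(x)}{\partial x}W(x)\big)^T+2\lambda W(x)\Big)\hat B_\perp,\qquad \hat B_\perp=\begin{bmatrix}I_{n-m}\\ O_{m\times(n-m)}\end{bmatrix}.$$ Suppose the feasible set of this LMI constraint is non-empty, and let $f^*$ and $b_j^*$, $j=1,\ldots,m$, be optimizers of this problem. Then $f^*\in\mathcal{V}_f$ and $b_j^*\in\mathcal{V}_B$ for all $j=1,\ldots,m$.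
   Context: For an operator-valued positive definite kernel $K:\mathcal{X}\times\mathcal{X}\to\mathbb{R}^{n\times n}$ (i.e. $K(x,z)^T=K(z,x)$ and $\sum_{i,j}\langle y_i,K(x_i,x_j)y_j\rangle\ge0$ for all finite families), the RKHS $\mathcal{H}_K$ is the completion of the span of the functions $K_xy:=K(\cdot,x)y$ ($x\in\mathcal{X}$, $y\in\mathbb{R}^n$) under the inner product $\langle K_xy,K_zw\rangle_{\mathcal{H}_K}=\langle y,K(x,z)w\rangle$; it satisfies $\langle f(x),y\rangle=\langle f,K_xy\rangle_{\mathcal{H}_K}$. For $K\in\mathcal{C}^2$, $\partial_jK_xy$ denotes the function $z\mapsto \frac{\partial}{\partial s^j}K(r,s)\big|_{r=z,s=x}\,y$ (elementwise derivative). For a vector field $g$ and matrix function $W$, $\partial_gW(x)$ denotes the matrix whose $(p,q)$ entry is $\langle \nabla w_{pq}(x),g(x)\rangle$, the derivative of $w_{pq}$ along $g$. $\mathbb{S}_n$ is the set of symmetric $n\times n$ real matrices; $\preceq$ is the Loewner order. The matrix $\hat B_\perp$ satisfies $\hat B(x)^T\hat B_\perp=0$ because of the sparsity structure of $\mathcal{H}_K^B$. *)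

theory Defs
  imports "HOL-Analysis.Analysis"
begin

type_synonym 'n kernel = "real^'n \<Rightarrow> real^'n \<Rightarrow> real^'n^'n"

definition pd_kernel :: "(real^'n) set \<Rightarrow> 'n kernel \<Rightarrow> bool" where
  "pd_kernel X K \<longleftrightarrow>
     (\<forall>x\<in>X. \<forall>z\<in>X. transpose (K x z) = K z x) \<and>
     (\<forall>F :: ((real^'n) \<times> (real^'n)) list. set (map fst F) \<subseteq> X \<longrightarrow>
        0 \<le> (\<Sum>(x,y)\<leftarrow>F. \<Sum>(z,w)\<leftarrow>F. y \<bullet> (K x z *v w)))"

definition C2_on :: "('a::real_normed_vector) set \<Rightarrow> ('a \<Rightarrow> 'b::real_normed_vector) \<Rightarrow> bool" where
  "C2_on S F \<longleftrightarrow> (\<exists>D D2.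
      (\<forall>p\<in>S. (F has_derivative blinfun_apply (D p)) (at p)) \<and>
      (\<forall>p\<in>S. (D has_derivative blinfun_apply (D2 p)) (at p)) \<and>
      continuous_on S D2)"

definition C2_kernel :: "(real^'n) set \<Rightarrow> 'n kernel \<Rightarrow> bool" where
  "C2_kernel X K \<longleftrightarrow> C2_on (X \<times> X) (\<lambda>(r,s). K r s)"

definition kfun :: "'n kernel \<Rightarrow> ((real^'n) \<times> (real^'n)) list \<Rightarrow> real^'n \<Rightarrow> real^'n" where
  "kfun K F = (\<lambda>z. \<Sum>(x,y)\<leftarrow>F. K z x *v y)"

definition kip :: "'n kernel \<Rightarrow> ((real^'n) \<times> (real^'n)) list \<Rightarrow> ((real^'n) \<times> (real^'n)) list \<Rightarrow> real" where
  "kip K F G = (\<Sum>(x,y)\<leftarrow>F. \<Sum>(z,w)\<leftarrow>G. y \<bullet> (K x z *v w))"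

definition fam_diff :: "((real^'n) \<times> (real^'n)) list \<Rightarrow> ((real^'n) \<times> (real^'n)) list \<Rightarrow> ((real^'n) \<times> (real^'n)) list" where
  "fam_diff F G = F @ map (\<lambda>(x,y). (x, - y)) G"

text \<open>A sequence of span elements that is Cauchy in the RKHS norm and converges pointwise
  on X to f (completion of the span).\<close>
definition rkhs_approx :: "(real^'n) set \<Rightarrow> 'n kernel \<Rightarrow> (real^'n \<Rightarrow> real^'n)
     \<Rightarrow> (nat \<Rightarrow> ((real^'n) \<times> (real^'n)) list) \<Rightarrow> bool" where
  "rkhs_approx X K f Fs \<longleftrightarrow>
     (\<forall>k. set (map fst (Fs k)) \<subseteq> X) \<and>
     (\<forall>e>0. \<exists>N. \<forall>k\<ge>N. \<forall>l\<ge>N. kip K (fam_diff (Fs k) (Fs l)) (fam_diff (Fs k) (Fs l)) < e) \<and>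
     (\<forall>z\<in>X. (\<lambda>k. kfun K (Fs k) z) \<longlonglongrightarrow> f z)"

definition rkhs :: "(real^'n) set \<Rightarrow> 'n kernel \<Rightarrow> (real^'n \<Rightarrow> real^'n) set" where
  "rkhs X K = {f. \<exists>Fs. rkhs_approx X K f Fs}"

definition rkhs_norm2 :: "(real^'n) set \<Rightarrow> 'n kernel \<Rightarrow> (real^'n \<Rightarrow> real^'n) \<Rightarrow> real" where
  "rkhs_norm2 X K f = (SOME c. \<exists>Fs. rkhs_approx X K f Fs \<and> (\<lambda>k. kip K (Fs k) (Fs k)) \<longlonglongrightarrow> c)"

definition dK :: "'n kernel \<Rightarrow> 'n \<Rightarrow> real^'n \<Rightarrow> real^'n \<Rightarrow> real^'n \<Rightarrow> real^'n" where
  "dK K p x y = (\<lambda>z. frechet_derivative (\<lambda>s. K z s) (at x) (axis p 1) *v y)"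

definition Vspace :: "(real^'n) set \<Rightarrow> 'n kernel \<Rightarrow> (real^'n) set \<Rightarrow> (real^'n \<Rightarrow> real^'n) set" where
  "Vspace X K Xc = {g. \<exists>a a'. \<forall>z\<in>X.
      g z = (\<Sum>x\<in>Xc. K z x *v a x) + (\<Sum>x\<in>Xc. \<Sum>p\<in>UNIV. dK K p x (a' x p) z)}"

definition dir_deriv_mat :: "(real^'n \<Rightarrow> real^'n^'n) \<Rightarrow> (real^'n \<Rightarrow> real^'n) \<Rightarrow> real^'n \<Rightarrow> real^'n^'n" where
  "dir_deriv_mat W g x = frechet_derivative W (at x) (g x)"

definition loewner_le :: "real^'n^'n \<Rightarrow> real^'n^'n \<Rightarrow> bool" where
  "loewner_le A B \<longleftrightarrow> (\<forall>v. 0 \<le> v \<bullet> ((B - A) *v v))"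

text \<open>Index j of the first (n-m) coordinates (w.r.t. the linear order on the index type).\<close>
definition first_coord :: "nat \<Rightarrow> 'n::{finite,linorder} \<Rightarrow> bool" where
  "first_coord k j \<longleftrightarrow> card {i. i < j} < k"

text \<open>B_perp padded with zero columns to an n x n matrix: [I_{n-m} 0; 0 0].\<close>
definition Bperp_pad :: "nat \<Rightarrow> ((real, 'n::{finite,linorder}) vec, 'n) vec" where
  "Bperp_pad k = (\<chi> i j. if i = j \<and> first_coord k i then 1 else 0)"

definition F_lambda :: "nat \<Rightarrow> real \<Rightarrow> (real, 'n::{finite,linorder}) vec \<Rightarrow> ((real, 'n) vec \<Rightarrow> (real, 'n) vec)
     \<Rightarrow> ((real, 'n) vec \<Rightarrow> ((real, 'n) vec, 'n) vec) \<Rightarrow> ((real, 'n) vec, 'n) vec" where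
  "F_lambda k lam x f W =
     transpose (Bperp_pad k) **
       (- dir_deriv_mat W f x + jacobian f (at x) ** W x + transpose (jacobian f (at x) ** W x)
        + (2 * lam) *\<^sub>R W x) ** Bperp_pad k"

definition J_d :: "nat \<Rightarrow> (nat \<Rightarrow> real^'n) \<Rightarrow> (nat \<Rightarrow> real^'m) \<Rightarrow> (nat \<Rightarrow> real^'n)
     \<Rightarrow> real \<Rightarrow> real \<Rightarrow> (real^'n) set \<Rightarrow> 'n kernel \<Rightarrow> 'n kernel
     \<Rightarrow> (real^'n \<Rightarrow> real^'n) \<Rightarrow> ('m::finite \<Rightarrow> real^'n \<Rightarrow> real^'n) \<Rightarrow> real" where
  "J_d N xs us xds muf mub X Kf KB f b =
     (\<Sum>i<N. (norm (f (xs i) + (\<Sum>j\<in>UNIV. (us i $ j) *\<^sub>R b j (xs i)) - xds i))\<^sup>2)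
     + muf * rkhs_norm2 X Kf f + mub * (\<Sum>j\<in>UNIV. rkhs_norm2 X KB (b j))"

end

theory Submission
  imports Defs "HOL-Library.Function_Algebras"
begin


instantiation "fun" :: (type, real_vector) real_vector
begin
definition scaleR_fun :: "real \<Rightarrow> ('a \<Rightarrow> 'b) \<Rightarrow> 'a \<Rightarrow> 'b" where
  "scaleR_fun c f = (\<lambda>x. c *\<^sub>R f x)"
instance by standard (auto simp: scaleR_fun_def fun_eq_iff scaleR_add_right scaleR_add_left)
end

lemma scaleR_fun_apply[simp]: "(c *\<^sub>R f) x = c *\<^sub>R f x"
  by (simp add: scaleR_fun_def)


lemma quad_disc:
  fixes a b c :: real
  assumes h: "\<And>t. 0 \<le> a - 2*t*b + t^2*c" and "0 \<le> a" "0 \<le> c"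
  shows "b^2 \<le> a*c"
proof (cases "c = 0")
  case True
  have "b = 0"
  proof (rule ccontr)
    assume "b \<noteq> 0"
    have "0 \<le> a - 2*((a+1)/(2*b))*b + ((a+1)/(2*b))^2*c" by (rule h)
    with True \<open>b \<noteq> 0\<close> show False by (simp add: field_simps)
  qed
  then show ?thesis using assms by simp
next
  case False
  then have c: "c > 0" using assms by simp
  have "0 \<le> a - 2*(b/c)*b + (b/c)^2*c" by (rule h)
  then have "0 \<le> a - b^2/c" using c by (simp add: field_simps power2_eq_square)
  then show ?thesis using c by (simp add: field_simps)
qed

locale semi_ip =
  fixes V :: "'a::real_vector set" and ip :: "'a \<Rightarrow> 'a \<Rightarrow> real"
  assumes V0: "0 \<in> V" and Vadd: "x\<in>V \<Longrightarrow> y\<in>V \<Longrightarrow> x+y \<in> V" and Vscale: "x\<in>V \<Longrightarrow> c *\<^sub>R x \<in> V"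
  and ip_add: "x\<in>V \<Longrightarrow> y\<in>V \<Longrightarrow> z\<in>V \<Longrightarrow> ip (x+y) z = ip x z + ip y z"
  and ip_scale: "x\<in>V \<Longrightarrow> y\<in>V \<Longrightarrow> ip (c *\<^sub>R x) y = c * ip x y"
  and ip_sym: "x\<in>V \<Longrightarrow> y\<in>V \<Longrightarrow> ip x y = ip y x"
  and ip_nonneg: "x\<in>V \<Longrightarrow> 0 \<le> ip x x"
begin

lemma Vminus: "x\<in>V \<Longrightarrow> -x \<in> V"
proof -
  assume "x \<in> V"
  then have "(-1) *\<^sub>R x \<in> V" by (rule Vscale)
  then show ?thesis by simp
qed

lemma Vdiff: "x\<in>V \<Longrightarrow> y\<in>V \<Longrightarrow> x - y \<in> V"
proof -
  assume "x \<in> V" "y \<in> V"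
  then have "x + (-y) \<in> V" by (intro Vadd Vminus)
  then show ?thesis by simp
qed

lemma Vsum: "finite I \<Longrightarrow> (\<And>i. i\<in>I \<Longrightarrow> r i \<in> V) \<Longrightarrow> (\<Sum>i\<in>I. r i) \<in> V"
  by (induction I rule: finite_induct) (auto intro: V0 Vadd)

lemma ip_add2: "x\<in>V \<Longrightarrow> y\<in>V \<Longrightarrow> z\<in>V \<Longrightarrow> ip z (x+y) = ip z x + ip z y"
  by (metis ip_sym ip_add Vadd)

lemma ip_scale2: "x\<in>V \<Longrightarrow> y\<in>V \<Longrightarrow> ip y (c *\<^sub>R x) = c * ip y x"
  by (metis ip_sym ip_scale Vscale)

lemma ip_minus1: "x\<in>V \<Longrightarrow> y\<in>V \<Longrightarrow> ip (-x) y = - ip x y"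
  using ip_scale[of x y "-1"] by simp

lemma ip_minus2: "x\<in>V \<Longrightarrow> y\<in>V \<Longrightarrow> ip y (-x) = - ip y x"
  using ip_scale2[of x y "-1"] by simp

lemma ip_diff1: "x\<in>V \<Longrightarrow> y\<in>V \<Longrightarrow> z\<in>V \<Longrightarrow> ip (x-y) z = ip x z - ip y z"
proof -
  assume "x\<in>V" "y\<in>V" "z\<in>V"
  then have "ip (x + (-y)) z = ip x z + ip (-y) z" by (intro ip_add Vminus)
  then show ?thesis using ip_minus1 \<open>y\<in>V\<close> \<open>z\<in>V\<close> by (simp only: diff_conv_add_uminus)
qed

lemma ip_diff2: "x\<in>V \<Longrightarrow> y\<in>V \<Longrightarrow> z\<in>V \<Longrightarrow> ip z (x-y) = ip z x - ip z y"
proof -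
  assume "x\<in>V" "y\<in>V" "z\<in>V"
  then have "ip z (x + (-y)) = ip z x + ip z (-y)" by (intro ip_add2 Vminus)
  then show ?thesis using ip_minus2 \<open>y\<in>V\<close> \<open>z\<in>V\<close> by (simp only: diff_conv_add_uminus)
qed

lemma ip_zero1[simp]: "y\<in>V \<Longrightarrow> ip 0 y = 0"
  using ip_scale[OF V0, of y 0] by simp

lemma ip_zero2[simp]: "y\<in>V \<Longrightarrow> ip y 0 = 0"
  using ip_scale2[OF V0, of y 0] by simp

lemma ip_sum1: "finite I \<Longrightarrow> (\<And>i. i\<in>I \<Longrightarrow> r i \<in> V) \<Longrightarrow> y \<in> V \<Longrightarrow> ip (\<Sum>i\<in>I. r i) y = (\<Sum>i\<in>I. ip (r i) y)"
  by (induction I rule: finite_induct) (auto simp: ip_add Vsum)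

lemma ip_sum2: "finite I \<Longrightarrow> (\<And>i. i\<in>I \<Longrightarrow> r i \<in> V) \<Longrightarrow> y \<in> V \<Longrightarrow> ip y (\<Sum>i\<in>I. r i) = (\<Sum>i\<in>I. ip y (r i))"
  by (induction I rule: finite_induct) (auto simp: ip_add2 Vsum)

lemma ip_expand: "x\<in>V \<Longrightarrow> y\<in>V \<Longrightarrow> ip (x - t *\<^sub>R y) (x - t *\<^sub>R y) = ip x x - 2*t*ip x y + t^2 * ip y y"
  by (simp add: ip_diff1 ip_diff2 Vdiff Vscale ip_scale ip_scale2 ip_sym[of y x] power2_eq_square algebra_simps)

lemma CS: "x\<in>V \<Longrightarrow> y\<in>V \<Longrightarrow> (ip x y)^2 \<le> ip x x * ip y y"
  by (rule quad_disc) (auto simp: ip_expand[symmetric] ip_nonneg Vdiff Vscale)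

definition nm :: "'a \<Rightarrow> real" where "nm x = sqrt \<bar>ip x x\<bar>"

lemma nm_nonneg: "0 \<le> nm x" by (simp add: nm_def)

lemma nm_sq: "x\<in>V \<Longrightarrow> (nm x)^2 = ip x x"
proof -
  assume "x \<in> V"
  then have "0 \<le> ip x x" by (rule ip_nonneg)
  then show ?thesis by (simp add: nm_def)
qed

lemma CS_abs: "x\<in>V \<Longrightarrow> y\<in>V \<Longrightarrow> \<bar>ip x y\<bar> \<le> nm x * nm y"
proof -
  assume "x\<in>V" "y\<in>V"
  then have "(ip x y)^2 \<le> (nm x * nm y)^2" by (simp add: CS nm_sq power_mult_distrib)
  then have "\<bar>ip x y\<bar> \<le> \<bar>nm x * nm y\<bar>" by (simp only: abs_le_square_iff)
  then show ?thesis by (simp add: nm_nonneg)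
qed

lemma ip_null: "x\<in>V \<Longrightarrow> y\<in>V \<Longrightarrow> ip x x = 0 \<Longrightarrow> ip x y = 0"
  using CS_abs[of x y] by (simp add: nm_def)

lemma nm_triangle: "x\<in>V \<Longrightarrow> y\<in>V \<Longrightarrow> nm (x+y) \<le> nm x + nm y"
proof -
  assume x: "x\<in>V" and y: "y\<in>V"
  have "(nm (x+y))^2 = ip x x + 2 * ip x y + ip y y"
    using x y by (simp add: nm_sq Vadd ip_add ip_add2 ip_sym[of y x])
  also have "\<dots> \<le> (nm x)^2 + 2 * (nm x * nm y) + (nm y)^2"
    using CS_abs[OF x y] x y by (simp add: nm_sq)
  also have "\<dots> = (nm x + nm y)^2" by (simp add: power2_eq_square algebra_simps)
  finally show ?thesis using nm_nonneg by (meson add_nonneg_nonneg power2_le_imp_le)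
qed

lemma nm_scale: "x\<in>V \<Longrightarrow> nm (c *\<^sub>R x) = \<bar>c\<bar> * nm x"
proof -
  assume "x \<in> V"
  then have "ip (c *\<^sub>R x) (c *\<^sub>R x) = c^2 * ip x x" by (simp add: ip_scale ip_scale2 Vscale power2_eq_square)
  then show ?thesis by (simp add: nm_def abs_mult real_sqrt_mult)
qed

lemma nm_diff_sym: "x\<in>V \<Longrightarrow> y\<in>V \<Longrightarrow> nm (x - y) = nm (y - x)"
  using nm_scale[of "x - y" "-1"] by (simp add: Vdiff)

lemma nm_zero_ip: "x\<in>V \<Longrightarrow> nm x = 0 \<longleftrightarrow> ip x x = 0"
  by (simp add: nm_def)

lemma ip_le_nm: "x\<in>V \<Longrightarrow> ip x x \<le> e^2 \<Longrightarrow> 0 \<le> e \<Longrightarrow> nm x \<le> e"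
  by (metis nm_nonneg nm_sq power2_le_imp_le)

lemma nm_lt: "x\<in>V \<Longrightarrow> ip x x < e^2 \<Longrightarrow> 0 \<le> e \<Longrightarrow> nm x < e"
  by (metis nm_nonneg nm_sq power_less_imp_less_base)

definition cauchyS :: "(nat \<Rightarrow> 'a) \<Rightarrow> bool" where
  "cauchyS u \<longleftrightarrow> (\<forall>k. u k \<in> V) \<and> (\<forall>e>0. \<exists>N. \<forall>k\<ge>N. \<forall>l\<ge>N. ip (u k - u l) (u k - u l) < e)"

lemma cauchyS_nm: "cauchyS u \<Longrightarrow> e > 0 \<Longrightarrow> \<exists>N. \<forall>k\<ge>N. \<forall>l\<ge>N. nm (u k - u l) < e"
proof -
  assume c: "cauchyS u" "e > 0"
  then obtain N where N: "\<forall>k\<ge>N. \<forall>l\<ge>N. ip (u k - u l) (u k - u l) < e^2"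
    unfolding cauchyS_def by (meson zero_less_power)
  show ?thesis
    using N c by (intro exI[of _ N]) (auto intro!: nm_lt Vdiff simp: cauchyS_def)
qed

lemma cauchyS_bounded: "cauchyS u \<Longrightarrow> \<exists>M. \<forall>k. nm (u k) \<le> M"
proof -
  assume c: "cauchyS u"
  then have uV: "\<And>k. u k \<in> V" by (simp add: cauchyS_def)
  obtain N where N: "\<forall>k\<ge>N. \<forall>l\<ge>N. nm (u k - u l) < 1" using cauchyS_nm[OF c, of 1] by auto
  define M where "M = Max ((\<lambda>k. nm (u k)) ` {..N}) + 1"
  have "nm (u k) \<le> M" for k
  proof (cases "k \<le> N")
    case True
    then show ?thesis unfolding M_def by (smt (verit) Max_ge atMost_iff finite_atMost finite_imageI imageI)
  next
    case False
    have "u k = (u k - u N) + u N" by simp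
    then have "nm (u k) \<le> nm (u k - u N) + nm (u N)" using nm_triangle[of "u k - u N" "u N"] uV by (metis Vdiff)
    moreover have "nm (u k - u N) < 1" using N False by auto
    moreover have "nm (u N) \<le> Max ((\<lambda>k. nm (u k)) ` {..N})" by (intro Max_ge) auto
    ultimately show ?thesis unfolding M_def by linarith
  qed
  then show ?thesis by blast
qed

lemma cauchyS_add: "cauchyS u \<Longrightarrow> cauchyS v \<Longrightarrow> cauchyS (\<lambda>k. u k + v k)"
proof -
  assume cu: "cauchyS u" and cv: "cauchyS v"
  have uV: "\<And>k. u k \<in> V" and vV: "\<And>k. v k \<in> V" using cu cv by (auto simp: cauchyS_def)
  show ?thesis unfolding cauchyS_def
  proof (intro conjI allI impI)
    show "u k + v k \<in> V" for k using uV vV by (simp add: Vadd)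
    fix e :: real assume e: "e > 0"
    obtain N1 where N1: "\<forall>k\<ge>N1. \<forall>l\<ge>N1. nm (u k - u l) < sqrt e / 2" using cauchyS_nm[OF cu, of "sqrt e / 2"] e by auto
    obtain N2 where N2: "\<forall>k\<ge>N2. \<forall>l\<ge>N2. nm (v k - v l) < sqrt e / 2" using cauchyS_nm[OF cv, of "sqrt e / 2"] e by auto
    show "\<exists>N. \<forall>k\<ge>N. \<forall>l\<ge>N. ip (u k + v k - (u l + v l)) (u k + v k - (u l + v l)) < e"
    proof (intro exI[of _ "max N1 N2"] allI impI)
      fix k l assume "max N1 N2 \<le> k" "max N1 N2 \<le> l"
      then have a: "nm (u k - u l) < sqrt e / 2" "nm (v k - v l) < sqrt e / 2" using N1 N2 by auto
      have eq: "u k + v k - (u l + v l) = (u k - u l) + (v k - v l)" by simp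
      have "nm (u k + v k - (u l + v l)) \<le> nm (u k - u l) + nm (v k - v l)"
        unfolding eq using uV vV by (intro nm_triangle Vdiff)
      also have "\<dots> < sqrt e" using a by simp
      finally have c: "nm (u k + v k - (u l + v l)) < sqrt e" .
      have "(nm (u k + v k - (u l + v l)))^2 < (sqrt e)^2"
        by (rule power_strict_mono[OF c nm_nonneg]) simp
      then show "ip (u k + v k - (u l + v l)) (u k + v k - (u l + v l)) < e"
        using e uV vV by (simp add: nm_sq Vdiff Vadd)
    qed
  qed
qed

lemma ip_scale_both: "x \<in> V \<Longrightarrow> ip (c *\<^sub>R x) (c *\<^sub>R x) = c^2 * ip x x"
proof -
  assume x: "x \<in> V"
  have "ip (c *\<^sub>R x) (c *\<^sub>R x) = c * ip x (c *\<^sub>R x)" using x by (intro ip_scale Vscale)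
  also have "ip x (c *\<^sub>R x) = c * ip x x" using x by (intro ip_scale2)
  finally show ?thesis by (simp add: power2_eq_square)
qed

lemma cauchyS_scale: "cauchyS u \<Longrightarrow> cauchyS (\<lambda>k. c *\<^sub>R u k)"
proof -
  assume cu: "cauchyS u"
  have uV: "\<And>k. u k \<in> V" using cu by (auto simp: cauchyS_def)
  have cp: "c^2 + 1 > 0" by (simp add: add_nonneg_pos)
  show ?thesis unfolding cauchyS_def
  proof (intro conjI allI impI)
    show "c *\<^sub>R u k \<in> V" for k using uV by (rule Vscale)
    fix e :: real assume e: "e > 0"
    have e2: "e / (c^2 + 1) > 0" using e cp by simp
    obtain N where N: "\<forall>k\<ge>N. \<forall>l\<ge>N. ip (u k - u l) (u k - u l) < e / (c^2 + 1)"
      using cu e2 unfolding cauchyS_def by blast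
    show "\<exists>N. \<forall>k\<ge>N. \<forall>l\<ge>N. ip (c *\<^sub>R u k - c *\<^sub>R u l) (c *\<^sub>R u k - c *\<^sub>R u l) < e"
    proof (intro exI[of _ N] allI impI)
      fix k l assume "N \<le> k" "N \<le> l"
      then have a: "ip (u k - u l) (u k - u l) < e / (c^2 + 1)" using N by auto
      have dV: "u k - u l \<in> V" by (rule Vdiff[OF uV uV])
      have "ip (c *\<^sub>R u k - c *\<^sub>R u l) (c *\<^sub>R u k - c *\<^sub>R u l) = ip (c *\<^sub>R (u k - u l)) (c *\<^sub>R (u k - u l))"
        by (simp only: scaleR_diff_right)
      also have "\<dots> = c^2 * ip (u k - u l) (u k - u l)"
        using dV by (rule ip_scale_both)
      also have "\<dots> \<le> c^2 * (e / (c^2 + 1))" by (rule mult_left_mono[OF less_imp_le[OF a]]) simp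
      also have "\<dots> < e"
      proof -
        have "c^2 * (e / (c^2 + 1)) = e * (c^2 / (c^2 + 1))" by simp
        also have "c^2 / (c^2+1) < 1" using cp by (subst divide_less_eq_1_pos) auto
        then have "e * (c^2 / (c^2+1)) < e * 1" using e by (rule mult_strict_left_mono)
        finally show ?thesis by simp
      qed
      finally show "ip (c *\<^sub>R u k - c *\<^sub>R u l) (c *\<^sub>R u k - c *\<^sub>R u l) < e" .
    qed
  qed
qed

lemma cauchyS_const: "x \<in> V \<Longrightarrow> cauchyS (\<lambda>k. x)"
  by (simp add: cauchyS_def V0)

lemma cauchyS_diff: "cauchyS u \<Longrightarrow> cauchyS v \<Longrightarrow> cauchyS (\<lambda>k. u k - v k)"
  using cauchyS_add[of u "\<lambda>k. (-1) *\<^sub>R v k"] cauchyS_scale[of v "-1"] by simp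

lemma cauchyS_conv: "cauchyS u \<Longrightarrow> cauchyS v \<Longrightarrow> convergent (\<lambda>k. ip (u k) (v k))"
proof -
  assume cu: "cauchyS u" and cv: "cauchyS v"
  have uV: "\<And>k. u k \<in> V" and vV: "\<And>k. v k \<in> V" using cu cv by (auto simp: cauchyS_def)
  obtain M1 where M1: "\<And>k. nm (u k) \<le> M1" using cauchyS_bounded[OF cu] by auto
  obtain M2 where M2: "\<And>k. nm (v k) \<le> M2" using cauchyS_bounded[OF cv] by auto
  have M1p: "0 \<le> M1" "0 \<le> M2" using M1[of 0] M2[of 0] nm_nonneg[of "u 0"] nm_nonneg[of "v 0"] by linarith+
  have "Cauchy (\<lambda>k. ip (u k) (v k))"
  proof (rule CauchyI)
    fix e :: real assume e: "e > 0"
    define d where "d = e / (M1 + M2 + 1)"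
    have d: "d > 0" using e M1p by (simp add: d_def)
    obtain N1 where N1: "\<forall>k\<ge>N1. \<forall>l\<ge>N1. nm (u k - u l) < d" using cauchyS_nm[OF cu d] by auto
    obtain N2 where N2: "\<forall>k\<ge>N2. \<forall>l\<ge>N2. nm (v k - v l) < d" using cauchyS_nm[OF cv d] by auto
    show "\<exists>N. \<forall>k\<ge>N. \<forall>l\<ge>N. norm (ip (u k) (v k) - ip (u l) (v l)) < e"
    proof (intro exI[of _ "max N1 N2"] allI impI)
      fix k l assume "max N1 N2 \<le> k" "max N1 N2 \<le> l"
      then have a: "nm (u k - u l) < d" "nm (v k - v l) < d" using N1 N2 by auto
      have "ip (u k) (v k) - ip (u l) (v l) = ip (u k - u l) (v k) + ip (u l) (v k - v l)"
        using uV vV by (simp add: ip_diff1 ip_diff2)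
      then have "\<bar>ip (u k) (v k) - ip (u l) (v l)\<bar> \<le> nm (u k - u l) * nm (v k) + nm (u l) * nm (v k - v l)"
        using CS_abs[of "u k - u l" "v k"] CS_abs[of "u l" "v k - v l"] uV vV Vdiff by (smt (verit))
      also have "\<dots> \<le> d * M2 + M1 * d"
        using a M1 M2 nm_nonneg d M1p by (intro add_mono mult_mono) (auto intro: less_imp_le)
      also have "\<dots> = d * (M1 + M2)" by (simp add: algebra_simps)
      also have "\<dots> < d * (M1 + M2 + 1)" using d by simp
      also have "\<dots> = e" using M1p by (simp add: d_def)
      finally show "norm (ip (u k) (v k) - ip (u l) (v l)) < e" by simp
    qed
  qed
  then show ?thesis by (simp add: Cauchy_convergent_iff)
qed

lemma cauchyS_null:
  assumes c: "cauchyS d" and lim: "\<And>k. (\<lambda>l. ip (d k) (d l)) \<longlonglongrightarrow> 0"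
  shows "(\<lambda>k. ip (d k) (d k)) \<longlonglongrightarrow> 0"
proof (rule LIMSEQ_I)
  fix e :: real assume e: "e > 0"
  have dV: "\<And>k. d k \<in> V" using c by (auto simp: cauchyS_def)
  obtain M where M: "\<And>k. nm (d k) \<le> M" using cauchyS_bounded[OF c] by auto
  have Mp: "0 \<le> M" using M[of 0] nm_nonneg[of "d 0"] by linarith
  define e' where "e' = e / (2 * (M + 1))"
  have e': "e' > 0" using e Mp by (simp add: e'_def)
  obtain N where N: "\<forall>k\<ge>N. \<forall>l\<ge>N. nm (d k - d l) < e'" using cauchyS_nm[OF c e'] by auto
  show "\<exists>N. \<forall>k\<ge>N. norm (ip (d k) (d k) - 0) < e"
  proof (intro exI[of _ N] allI impI)
    fix k assume k: "N \<le> k"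
    have "ip (d k) (d k) \<le> M * e'"
    proof (rule LIMSEQ_le_const[where X="\<lambda>l. M * e' + ip (d k) (d l)"])
      show "(\<lambda>l. M * e' + ip (d k) (d l)) \<longlonglongrightarrow> M * e'" using tendsto_add[OF tendsto_const lim[of k]] by simp
      show "\<exists>N'. \<forall>l\<ge>N'. ip (d k) (d k) \<le> M * e' + ip (d k) (d l)"
      proof (intro exI[of _ N] allI impI)
        fix l assume l: "N \<le> l"
        have "ip (d k) (d k) = ip (d k) (d k - d l) + ip (d k) (d l)" using dV by (simp add: ip_diff2)
        also have "ip (d k) (d k - d l) \<le> nm (d k) * nm (d k - d l)"
          using CS_abs[of "d k" "d k - d l"] dV Vdiff by fastforce
        also have "\<dots> \<le> M * e'" using M N k l nm_nonneg Mp by (intro mult_mono) (auto intro: less_imp_le simp: nm_diff_sym dV)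
        finally show "ip (d k) (d k) \<le> M * e' + ip (d k) (d l)" by simp
      qed
    qed
    also have "M * e' < e"
    proof -
      have "M * e' = e * (M / (2*(M+1)))" by (simp add: e'_def)
      also have "M / (2*(M+1)) < 1" using Mp by simp
      then have "e * (M / (2*(M+1))) < e * 1" using e by (intro mult_strict_left_mono) auto
      finally show ?thesis by simp
    qed
    finally show "norm (ip (d k) (d k) - 0) < e" using ip_nonneg[OF dV[of k]] by simp
  qed
qed


lemma proj_exists:
  assumes "finite I"
  shows "(\<forall>i\<in>I. r i \<in> V) \<longrightarrow> (\<forall>f\<in>V. \<exists>c. \<forall>i\<in>I. ip (f - (\<Sum>j\<in>I. c j *\<^sub>R r j)) (r i) = 0)"
  using assms
proof (induction I rule: finite_induct)
  case empty
  then show ?case by auto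
next
  case (insert a I)
  show ?case
  proof (intro impI ballI)
    fix f assume rI: "\<forall>i\<in>insert a I. r i \<in> V" and f: "f \<in> V"
    have rV: "\<And>i. i \<in> I \<Longrightarrow> r i \<in> V" and ra: "r a \<in> V" using rI by auto
    obtain c0 where c0: "\<forall>i\<in>I. ip (f - (\<Sum>j\<in>I. c0 j *\<^sub>R r j)) (r i) = 0"
      using insert.IH rI f by auto
    obtain ca where ca: "\<forall>i\<in>I. ip (r a - (\<Sum>j\<in>I. ca j *\<^sub>R r j)) (r i) = 0"
      using insert.IH rI ra by auto
    define g0 where "g0 = (\<Sum>j\<in>I. c0 j *\<^sub>R r j)"
    define pa where "pa = (\<Sum>j\<in>I. ca j *\<^sub>R r j)"
    define s where "s = r a - pa"
    define \<beta> where "\<beta> = ip (f - g0) s / ip s s"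
    define c where "c = (\<lambda>j. if j = a then \<beta> else c0 j - \<beta> * ca j)"
    have g0V: "g0 \<in> V" and paV: "pa \<in> V" using rV by (auto simp: g0_def pa_def intro!: Vsum Vscale insert)
    have sV: "s \<in> V" using paV ra by (simp add: s_def Vdiff)
    have fg0: "f - g0 \<in> V" using f g0V by (simp add: Vdiff)
    have sum_c: "(\<Sum>j\<in>insert a I. c j *\<^sub>R r j) = g0 + \<beta> *\<^sub>R s"
    proof -
      have "(\<Sum>j\<in>insert a I. c j *\<^sub>R r j) = \<beta> *\<^sub>R r a + (\<Sum>j\<in>I. (c0 j - \<beta> * ca j) *\<^sub>R r j)"
        using insert.hyps by (simp add: c_def) (intro sum.cong, auto)
      also have "\<dots> = \<beta> *\<^sub>R r a + g0 - \<beta> *\<^sub>R pa"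
        by (simp add: g0_def pa_def scaleR_diff_left sum_subtractf scaleR_sum_right)
      finally show ?thesis by (simp add: s_def algebra_simps)
    qed
    have orth_span: "ip u pa = 0" if "u \<in> V" "\<forall>i\<in>I. ip u (r i) = 0" for u
      using that rV unfolding pa_def
      by (subst ip_sum2) (auto simp: ip_scale2 Vscale insert)
    have s_orth: "\<forall>i\<in>I. ip s (r i) = 0" using ca by (simp add: s_def pa_def)
    have key: "ip (f - g0) s - \<beta> * ip s s = 0"
    proof (cases "ip s s = 0")
      case True
      then show ?thesis using ip_null[OF sV fg0] ip_sym[OF sV fg0] by simp
    qed (simp add: \<beta>_def)
    have res: "f - (g0 + \<beta> *\<^sub>R s) = (f - g0) - \<beta> *\<^sub>R s" by simp
    have resV: "(f - g0) - \<beta> *\<^sub>R s \<in> V" using fg0 sV by (simp add: Vdiff Vscale)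
    have "ip ((f - g0) - \<beta> *\<^sub>R s) (r i) = 0" if "i \<in> I" for i
      using that c0 s_orth fg0 sV rV by (simp add: ip_diff1 Vscale ip_scale g0_def)
    moreover have "ip ((f - g0) - \<beta> *\<^sub>R s) (r a) = 0"
    proof -
      have "r a = s + pa" by (simp add: s_def)
      then have "ip ((f - g0) - \<beta> *\<^sub>R s) (r a) = ip ((f - g0) - \<beta> *\<^sub>R s) s + ip ((f - g0) - \<beta> *\<^sub>R s) pa"
        using resV sV paV by (simp add: ip_add2)
      also have "ip ((f - g0) - \<beta> *\<^sub>R s) pa = 0"
        using \<open>\<And>i. i \<in> I \<Longrightarrow> ip ((f - g0) - \<beta> *\<^sub>R s) (r i) = 0\<close> resV by (intro orth_span) auto
      also have "ip ((f - g0) - \<beta> *\<^sub>R s) s = 0"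
        using key fg0 sV by (simp add: ip_diff1 Vscale ip_scale)
      finally show ?thesis by simp
    qed
    ultimately show "\<exists>c. \<forall>i\<in>insert a I. ip (f - (\<Sum>j\<in>insert a I. c j *\<^sub>R r j)) (r i) = 0"
      by (intro exI[of _ c]) (auto simp: sum_c res)
  qed
qed

end



lemma sum_list_swap: "(\<Sum>x\<leftarrow>xs. \<Sum>y\<leftarrow>ys. (f x y::'a::comm_monoid_add)) = (\<Sum>y\<leftarrow>ys. \<Sum>x\<leftarrow>xs. f x y)"
  by (induction xs) (auto simp: sum_list_addf)

lemma sum_list_swap2: "(\<Sum>(x,y)\<leftarrow>xs. \<Sum>(z,w)\<leftarrow>ys. (f x y z w::'a::comm_monoid_add)) = (\<Sum>(z,w)\<leftarrow>ys. \<Sum>(x,y)\<leftarrow>xs. f x y z w)"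
  by (induction xs) (auto simp: split_def sum_list_addf)

lemma kfun_Nil[simp]: "kfun K [] = (\<lambda>z. 0)" by (simp add: kfun_def)
lemma kfun_Cons[simp]: "kfun K ((x,y)#F) z = K z x *v y + kfun K F z" by (simp add: kfun_def)
lemma kfun_append[simp]: "kfun K (F@G) z = kfun K F z + kfun K G z" by (simp add: kfun_def)
lemma kip_Nil[simp]: "kip K [] G = 0" "kip K F [] = 0" by (simp_all add: kip_def) (induction F, auto)
lemma kip_Cons1: "kip K ((x,y)#F) G = (\<Sum>(z,w)\<leftarrow>G. y \<bullet> (K x z *v w)) + kip K F G" by (simp add: kip_def)
lemma kip_append1: "kip K (F@G) H = kip K F H + kip K G H" by (simp add: kip_def)
lemma kip_append2: "kip K H (F@G) = kip K H F + kip K H G" by (induction H) (auto simp: kip_def)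

definition sc :: "real \<Rightarrow> ((real^'n) \<times> (real^'n)) list \<Rightarrow> ((real^'n) \<times> (real^'n)) list" where
  "sc c F = map (\<lambda>(x,y). (x, c *\<^sub>R y)) F"

lemma kfun_sc[simp]: "kfun K (sc c F) z = c *\<^sub>R kfun K F z"
  by (induction F) (auto simp: sc_def kfun_def scaleR_right_distrib matrix_vector_mult_scaleR)


lemma kip_sc1: "kip K (sc c F) G = c * kip K F G"
  by (induction F) (auto simp: sc_def kip_def sum_list_const_mult[symmetric] algebra_simps intro!: arg_cong[where f=sum_list])

lemma kip_sc2_aux: "(\<Sum>(z,w)\<leftarrow>sc c G. y \<bullet> (K x z *v w)) = c * (\<Sum>(z,w)\<leftarrow>G. y \<bullet> (K x z *v w))"
  by (induction G) (auto simp: sc_def algebra_simps)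

lemma kip_sc2: "kip K F (sc c G) = c * kip K F G"
  by (induction F) (auto simp: kip_Cons1 kip_sc2_aux algebra_simps)

lemma fam_diff_sc: "fam_diff F G = F @ sc (-1) G"
  by (simp add: fam_diff_def sc_def)

locale rk =
  fixes X :: "(real^'n) set" and K :: "'n kernel"
  assumes pd: "pd_kernel X K"
begin

definition inX :: "((real^'n) \<times> (real^'n)) list \<Rightarrow> bool" where
  "inX F \<longleftrightarrow> set (map fst F) \<subseteq> X"

lemma inX_simps[simp]: "inX []" "inX ((x,y)#F) \<longleftrightarrow> x \<in> X \<and> inX F" "inX (F@G) \<longleftrightarrow> inX F \<and> inX G"
  "inX (sc c F) \<longleftrightarrow> inX F" "inX (fam_diff F G) \<longleftrightarrow> inX F \<and> inX G"
  by (auto simp: inX_def sc_def fam_diff_def image_iff)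

lemma Ktr: "x \<in> X \<Longrightarrow> z \<in> X \<Longrightarrow> transpose (K x z) = K z x"
  using pd by (auto simp: pd_kernel_def)

lemma Kdot: "x \<in> X \<Longrightarrow> z \<in> X \<Longrightarrow> (K z x *v y) \<bullet> w = y \<bullet> (K x z *v w)"
  by (metis Ktr dot_lmul_matrix vector_transpose_matrix)

lemma kip_eval: "inX F \<Longrightarrow> inX G \<Longrightarrow> kip K F G = (\<Sum>(z,w)\<leftarrow>G. kfun K F z \<bullet> w)"
proof (induction F)
  case Nil
  then show ?case by (induction G) auto
next
  case (Cons a F)
  obtain x y where a: "a = (x,y)" by force
  have "(\<Sum>(z,w)\<leftarrow>G. y \<bullet> (K x z *v w)) + (\<Sum>(z,w)\<leftarrow>G. kfun K F z \<bullet> w)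
      = (\<Sum>(z,w)\<leftarrow>G. kfun K ((x,y)#F) z \<bullet> w)" using Cons.prems unfolding a
  proof (induction G)
    case (Cons b G)
    then show ?case by (cases b) (auto simp: Kdot inner_add_left)
  qed auto
  then show ?case using Cons by (simp add: a kip_Cons1)
qed

lemma kip_sym: "inX F \<Longrightarrow> inX G \<Longrightarrow> kip K F G = kip K G F"
proof -
  assume F: "inX F" and G: "inX G"
  have "kip K F G = (\<Sum>(x,y)\<leftarrow>F. \<Sum>(z,w)\<leftarrow>G. y \<bullet> (K x z *v w))" by (simp add: kip_def)
  also have "\<dots> = (\<Sum>(x,y)\<leftarrow>F. \<Sum>(z,w)\<leftarrow>G. w \<bullet> (K z x *v y))"
    using F G unfolding inX_def
    by (intro arg_cong[where f=sum_list] map_cong refl) (auto intro!: arg_cong[where f=sum_list] map_cong, metis Kdot inner_commute image_subset_iff fst_conv)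
  also have "\<dots> = kip K G F" unfolding kip_def
    by (rule sum_list_swap2)
  finally show ?thesis .
qed

lemma kip_nonneg: "inX F \<Longrightarrow> 0 \<le> kip K F F"
  using pd by (auto simp: pd_kernel_def kip_def inX_def)


lemma kfun_fun_append: "kfun K (F@G) = kfun K F + kfun K G" by (rule ext) simp
lemma kfun_fun_sc: "kfun K (sc c F) = c *\<^sub>R kfun K F" by (rule ext) simp
lemma kfun_fun_Nil: "kfun K [] = 0" by (rule ext) simp
lemma kfun_fun_diff: "kfun K (fam_diff F G) = kfun K F - kfun K G"
  by (simp add: fam_diff_sc kfun_fun_append kfun_fun_sc)

lemma kip_left_cong: "inX F \<Longrightarrow> inX F' \<Longrightarrow> inX G \<Longrightarrow> kfun K F = kfun K F' \<Longrightarrow> kip K F G = kip K F' G"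
  by (simp add: kip_eval)

definition inP :: "(real^'n \<Rightarrow> real^'n) \<Rightarrow> bool" where
  "inP u \<longleftrightarrow> (\<exists>F. inX F \<and> u = kfun K F)"

definition rep :: "(real^'n \<Rightarrow> real^'n) \<Rightarrow> ((real^'n) \<times> (real^'n)) list" where
  "rep u = (SOME F. inX F \<and> u = kfun K F)"

definition ipP :: "(real^'n \<Rightarrow> real^'n) \<Rightarrow> (real^'n \<Rightarrow> real^'n) \<Rightarrow> real" where
  "ipP u v = kip K (rep u) (rep v)"

lemma rep: "inP u \<Longrightarrow> inX (rep u) \<and> u = kfun K (rep u)"
  unfolding inP_def rep_def by (rule someI_ex)

lemma inP_kfun: "inX F \<Longrightarrow> inP (kfun K F)"
  by (auto simp: inP_def)

lemma ipP_kfun: "inX F \<Longrightarrow> inX G \<Longrightarrow> ipP (kfun K F) (kfun K G) = kip K F G"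
proof -
  assume F: "inX F" and G: "inX G"
  obtain F' where F': "rep (kfun K F) = F'" "inX F'" "kfun K F = kfun K F'" using rep[OF inP_kfun[OF F]] by blast
  obtain G' where G': "rep (kfun K G) = G'" "inX G'" "kfun K G = kfun K G'" using rep[OF inP_kfun[OF G]] by blast
  have "ipP (kfun K F) (kfun K G) = kip K F' G'" by (simp only: ipP_def F'(1) G'(1))
  also have "\<dots> = kip K F G'" using F F' G' by (intro kip_left_cong) auto
  also have "\<dots> = kip K G' F" by (rule kip_sym[OF F G'(2)])
  also have "\<dots> = kip K G F" using F G G' by (intro kip_left_cong) auto
  also have "\<dots> = kip K F G" by (rule kip_sym[OF G F])
  finally show ?thesis .
qed

lemma ipP_diff_kfun: "inX F \<Longrightarrow> inX G \<Longrightarrow> ipP (kfun K F - kfun K G) (kfun K F - kfun K G) = kip K (fam_diff F G) (fam_diff F G)"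
  unfolding kfun_fun_diff[symmetric] by (rule ipP_kfun) simp_all

lemma inP_E: assumes "inP u" obtains F where "inX F" "u = kfun K F"
  using assms by (auto simp: inP_def)

lemma ipP_eval: "inP a \<Longrightarrow> inX G \<Longrightarrow> ipP a (kfun K G) = (\<Sum>(z,w)\<leftarrow>G. a z \<bullet> w)"
proof -
  assume a: "inP a" and G: "inX G"
  obtain F where F: "inX F" "a = kfun K F" using a by (rule inP_E)
  show ?thesis using F G by (simp add: ipP_kfun kip_eval)
qed

sublocale P: semi_ip "{u. inP u}" ipP
proof
  show "0 \<in> {u. inP u}" using inP_kfun[of "[]"] by (simp add: zero_fun_def)
next
  fix x y :: "real^'n \<Rightarrow> real^'n"
  assume x: "x \<in> {u. inP u}" and y: "y \<in> {u. inP u}"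
  obtain F where F: "inX F" "x = kfun K F" using x by (auto elim: inP_E)
  obtain G where G: "inX G" "y = kfun K G" using y by (auto elim: inP_E)
  show "x + y \<in> {u. inP u}" using F G inP_kfun[of "F@G"] by (simp only: kfun_fun_append inX_simps mem_Collect_eq)
next
  fix x :: "real^'n \<Rightarrow> real^'n" and c :: real
  assume x: "x \<in> {u. inP u}"
  obtain F where F: "inX F" "x = kfun K F" using x by (auto elim: inP_E)
  show "c *\<^sub>R x \<in> {u. inP u}" using F inP_kfun[of "sc c F"] by (simp only: kfun_fun_sc inX_simps mem_Collect_eq)
next
  fix x y z :: "real^'n \<Rightarrow> real^'n"
  assume x: "x \<in> {u. inP u}" and y: "y \<in> {u. inP u}" and z: "z \<in> {u. inP u}"
  obtain F where F: "inX F" "x = kfun K F" using x by (auto elim: inP_E)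
  obtain G where G: "inX G" "y = kfun K G" using y by (auto elim: inP_E)
  obtain H where H: "inX H" "z = kfun K H" using z by (auto elim: inP_E)
  have "ipP (x + y) z = ipP (kfun K (F@G)) (kfun K H)" by (simp only: F G H kfun_fun_append)
  also have "\<dots> = kip K (F@G) H" using F G H by (intro ipP_kfun) auto
  also have "\<dots> = ipP x z + ipP y z" using F G H by (simp only: kip_append1 ipP_kfun)
  finally show "ipP (x + y) z = ipP x z + ipP y z" .
next
  fix x y :: "real^'n \<Rightarrow> real^'n" and c :: real
  assume x: "x \<in> {u. inP u}" and y: "y \<in> {u. inP u}"
  obtain F where F: "inX F" "x = kfun K F" using x by (auto elim: inP_E)
  obtain G where G: "inX G" "y = kfun K G" using y by (auto elim: inP_E)
  have "ipP (c *\<^sub>R x) y = ipP (kfun K (sc c F)) (kfun K G)" by (simp only: F G kfun_fun_sc)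
  also have "\<dots> = kip K (sc c F) G" using F G by (intro ipP_kfun) auto
  also have "\<dots> = c * ipP x y" using F G by (simp only: kip_sc1 ipP_kfun)
  finally show "ipP (c *\<^sub>R x) y = c * ipP x y" .
next
  fix x y :: "real^'n \<Rightarrow> real^'n"
  assume x: "x \<in> {u. inP u}" and y: "y \<in> {u. inP u}"
  obtain F where F: "inX F" "x = kfun K F" using x by (auto elim: inP_E)
  obtain G where G: "inX G" "y = kfun K G" using y by (auto elim: inP_E)
  show "ipP x y = ipP y x" using F G by (simp add: ipP_kfun kip_sym)
next
  fix x :: "real^'n \<Rightarrow> real^'n"
  assume x: "x \<in> {u. inP u}"
  obtain F where F: "inX F" "x = kfun K F" using x by (auto elim: inP_E)
  show "0 \<le> ipP x x" using F by (simp add: ipP_kfun kip_nonneg)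
qed

lemma tendsto_sum_list_eval:
  assumes "\<And>z w. (z,w) \<in> set G \<Longrightarrow> (\<lambda>l. g l z) \<longlonglongrightarrow> h z"
  shows "(\<lambda>l. \<Sum>(z,w)\<leftarrow>G. g l z \<bullet> w) \<longlonglongrightarrow> (\<Sum>(z,w)\<leftarrow>G. h z \<bullet> w)"
  using assms
proof (induction G)
  case Nil
  then show ?case by simp
next
  case (Cons a G)
  obtain z w where a: "a = (z,w)" by force
  have 1: "(\<lambda>l. g l z \<bullet> w) \<longlonglongrightarrow> h z \<bullet> w" using Cons.prems[of z w] by (intro tendsto_inner tendsto_const) (auto simp: a)
  have 2: "(\<lambda>l. \<Sum>(z,w)\<leftarrow>G. g l z \<bullet> w) \<longlonglongrightarrow> (\<Sum>(z,w)\<leftarrow>G. h z \<bullet> w)" using Cons by auto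
  show ?case using tendsto_add[OF 1 2] by (simp add: a)
qed

definition approxU :: "(real^'n \<Rightarrow> real^'n) \<Rightarrow> (nat \<Rightarrow> real^'n \<Rightarrow> real^'n) \<Rightarrow> bool" where
  "approxU f u \<longleftrightarrow> P.cauchyS u \<and> (\<forall>z\<in>X. (\<lambda>k. u k z) \<longlonglongrightarrow> f z)"

lemma approxU_inP: "approxU f u \<Longrightarrow> inP (u k)"
  by (simp add: approxU_def P.cauchyS_def)

lemma rkhs_approx_U: "rkhs_approx X K f Fs \<Longrightarrow> approxU f (\<lambda>k. kfun K (Fs k))"
proof -
  assume Fs: "rkhs_approx X K f Fs"
  have inX: "\<And>k. inX (Fs k)" using Fs by (simp add: rkhs_approx_def inX_def)
  define u where "u = (\<lambda>k. kfun K (Fs k))"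
  have "approxU f u" unfolding approxU_def P.cauchyS_def
  proof (intro conjI)
    show "\<forall>k. u k \<in> {u. inP u}" using inX by (simp add: u_def inP_kfun)
    show "\<forall>z\<in>X. (\<lambda>k. u k z) \<longlonglongrightarrow> f z" using Fs by (simp add: rkhs_approx_def u_def)
    show "\<forall>e>0. \<exists>N. \<forall>k\<ge>N. \<forall>l\<ge>N. ipP (u k - u l) (u k - u l) < e"
      using Fs inX by (simp add: rkhs_approx_def u_def ipP_diff_kfun)
  qed
  then show ?thesis by (simp add: u_def)
qed

lemma rkhs_iff: "f \<in> rkhs X K \<longleftrightarrow> (\<exists>u. approxU f u)"
proof
  assume "f \<in> rkhs X K"
  then obtain Fs where Fs: "rkhs_approx X K f Fs" by (auto simp: rkhs_def)
  have inX: "\<And>k. inX (Fs k)" using Fs by (simp add: rkhs_approx_def inX_def)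
  define u where "u = (\<lambda>k. kfun K (Fs k))"
  have "approxU f u" unfolding approxU_def P.cauchyS_def
  proof (intro conjI)
    show "\<forall>k. u k \<in> {u. inP u}" using inX by (simp add: u_def inP_kfun)
    show "\<forall>z\<in>X. (\<lambda>k. u k z) \<longlonglongrightarrow> f z" using Fs by (simp add: rkhs_approx_def u_def)
    show "\<forall>e>0. \<exists>N. \<forall>k\<ge>N. \<forall>l\<ge>N. ipP (u k - u l) (u k - u l) < e"
      using Fs inX by (simp add: rkhs_approx_def u_def ipP_diff_kfun)
  qed
  then show "\<exists>u. approxU f u" by blast
next
  assume "\<exists>u. approxU f u"
  then obtain u where u: "approxU f u" by blast
  define Fs where "Fs = (\<lambda>k. rep (u k))"
  have r: "\<And>k. inX (Fs k) \<and> u k = kfun K (Fs k)" using rep[OF approxU_inP[OF u]] by (simp add: Fs_def)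
  have "rkhs_approx X K f Fs" unfolding rkhs_approx_def
  proof (intro conjI)
    show "\<forall>k. set (map fst (Fs k)) \<subseteq> X" using r by (simp add: inX_def)
    have "kfun K (Fs k) = u k" for k using r[of k] by simp
    then show "\<forall>z\<in>X. (\<lambda>k. kfun K (Fs k) z) \<longlonglongrightarrow> f z" using u by (simp add: approxU_def)
    show "\<forall>e>0. \<exists>N. \<forall>k\<ge>N. \<forall>l\<ge>N. kip K (fam_diff (Fs k) (Fs l)) (fam_diff (Fs k) (Fs l)) < e"
    proof -
      have "kip K (fam_diff (Fs k) (Fs l)) (fam_diff (Fs k) (Fs l)) = ipP (u k - u l) (u k - u l)" for k l
        using r[of k] r[of l] ipP_diff_kfun[of "Fs k" "Fs l"] by simp
      then show ?thesis using u by (simp add: approxU_def P.cauchyS_def)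
    qed
  qed
  then show "f \<in> rkhs X K" by (auto simp: rkhs_def)
qed


lemma sum_list_zero_inner: "(\<Sum>(z,w)\<leftarrow>G. (0::real)) = 0"
  by (induction G) auto

lemma P_nm_tendsto: "(\<lambda>k. ipP (d k) (d k)) \<longlonglongrightarrow> 0 \<Longrightarrow> (\<lambda>k. P.nm (d k)) \<longlonglongrightarrow> 0"
  unfolding P.nm_def using tendsto_real_sqrt[OF tendsto_rabs] by fastforce

lemma approx_diff_null:
  assumes u: "approxU f u" and u': "approxU f u'"
  shows "(\<lambda>k. ipP (u k - u' k) (u k - u' k)) \<longlonglongrightarrow> 0"
proof (rule P.cauchyS_null)
  show c: "P.cauchyS (\<lambda>k. u k - u' k)" using u u' by (intro P.cauchyS_diff) (auto simp: approxU_def)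
  fix k
  define d where "d = (\<lambda>k. u k - u' k)"
  have dP: "\<And>k. inP (d k)" using c by (simp add: P.cauchyS_def d_def)
  have "ipP (d k) (d l) = (\<Sum>(z,w)\<leftarrow>rep (d k). d l z \<bullet> w)" for l
  proof -
    have "ipP (d k) (d l) = ipP (d l) (d k)" using dP by (intro P.ip_sym) auto
    also have "\<dots> = ipP (d l) (kfun K (rep (d k)))" using rep[OF dP[of k]] by simp
    also have "\<dots> = (\<Sum>(z,w)\<leftarrow>rep (d k). d l z \<bullet> w)" using rep[OF dP[of k]] dP by (intro ipP_eval) auto
    finally show ?thesis .
  qed
  moreover have "(\<lambda>l. \<Sum>(z,w)\<leftarrow>rep (d k). d l z \<bullet> w) \<longlonglongrightarrow> (\<Sum>(z,w)\<leftarrow>rep (d k). (0::real^'n) \<bullet> w)"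
  proof (rule tendsto_sum_list_eval)
    fix z w assume "(z,w) \<in> set (rep (d k))"
    then have z: "z \<in> X" using rep[OF dP[of k]] by (force simp: inX_def)
    have "(\<lambda>l. u l z - u' l z) \<longlonglongrightarrow> f z - f z" using u u' z by (intro tendsto_diff) (auto simp: approxU_def)
    then show "(\<lambda>l. d l z) \<longlonglongrightarrow> 0" by (simp add: d_def)
  qed
  ultimately show "(\<lambda>l. ipP (u k - u' k) (u l - u' l)) \<longlonglongrightarrow> 0" by (simp add: d_def sum_list_zero_inner)
qed

definition useq :: "(real^'n \<Rightarrow> real^'n) \<Rightarrow> nat \<Rightarrow> real^'n \<Rightarrow> real^'n" where
  "useq f = (SOME u. approxU f u)"

definition ipH :: "(real^'n \<Rightarrow> real^'n) \<Rightarrow> (real^'n \<Rightarrow> real^'n) \<Rightarrow> real" where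
  "ipH f g = lim (\<lambda>k. ipP (useq f k) (useq g k))"

lemma useq: "f \<in> rkhs X K \<Longrightarrow> approxU f (useq f)"
proof -
  assume "f \<in> rkhs X K"
  then obtain u where "approxU f u" by (auto simp: rkhs_iff)
  then show ?thesis unfolding useq_def by (metis someI)
qed

lemma approxU_H: "approxU f u \<Longrightarrow> f \<in> rkhs X K"
  by (auto simp: rkhs_iff)

lemma approxU_cauchy: "approxU f u \<Longrightarrow> P.cauchyS u"
  by (simp add: approxU_def)

lemma ipH_lim:
  assumes u: "approxU f u" and v: "approxU g v"
  shows "(\<lambda>k. ipP (u k) (v k)) \<longlonglongrightarrow> ipH f g"
proof -
  define u' where "u' = useq f"
  define v' where "v' = useq g"
  have u': "approxU f u'" and v': "approxU g v'" using useq approxU_H u v by (auto simp: u'_def v'_def)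
  have uP: "\<And>k. inP (u k)" "\<And>k. inP (u' k)" "\<And>k. inP (v k)" "\<And>k. inP (v' k)"
    using u u' v v' by (auto intro: approxU_inP)
  have "convergent (\<lambda>k. ipP (u' k) (v' k))" using u' v' by (intro P.cauchyS_conv) (auto simp: approxU_def)
  then have L: "(\<lambda>k. ipP (u' k) (v' k)) \<longlonglongrightarrow> ipH f g"
    by (simp add: convergent_LIMSEQ_iff ipH_def u'_def v'_def)
  obtain M1 where M1: "\<And>k. P.nm (u' k) \<le> M1" using P.cauchyS_bounded[OF approxU_cauchy[OF u']] by blast
  obtain M2 where M2: "\<And>k. P.nm (v k) \<le> M2" using P.cauchyS_bounded[OF approxU_cauchy[OF v]] by blast
  have n1: "(\<lambda>k. P.nm (u k - u' k)) \<longlonglongrightarrow> 0" using approx_diff_null[OF u u'] by (rule P_nm_tendsto)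
  have n2: "(\<lambda>k. P.nm (v k - v' k)) \<longlonglongrightarrow> 0" using approx_diff_null[OF v v'] by (rule P_nm_tendsto)
  have D: "(\<lambda>k. ipP (u k) (v k) - ipP (u' k) (v' k)) \<longlonglongrightarrow> 0"
  proof (rule Lim_null_comparison)
    show "\<forall>\<^sub>F k in sequentially. norm (ipP (u k) (v k) - ipP (u' k) (v' k)) \<le> P.nm (u k - u' k) * M2 + M1 * P.nm (v k - v' k)"
    proof (intro always_eventually allI)
      fix k
      have "ipP (u k) (v k) - ipP (u' k) (v' k) = ipP (u k - u' k) (v k) + ipP (u' k) (v k - v' k)"
        using uP by (simp add: P.ip_diff1 P.ip_diff2)
      moreover have "\<bar>ipP (u k - u' k) (v k)\<bar> \<le> P.nm (u k - u' k) * M2"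
        using P.CS_abs[of "u k - u' k" "v k"] uP P.Vdiff M2[of k] P.nm_nonneg
        by (smt (verit, best) mem_Collect_eq mult_left_mono)
      moreover have "\<bar>ipP (u' k) (v k - v' k)\<bar> \<le> M1 * P.nm (v k - v' k)"
        using P.CS_abs[of "u' k" "v k - v' k"] uP P.Vdiff M1[of k] P.nm_nonneg
        by (smt (verit, best) mem_Collect_eq mult_right_mono)
      ultimately show "norm (ipP (u k) (v k) - ipP (u' k) (v' k)) \<le> P.nm (u k - u' k) * M2 + M1 * P.nm (v k - v' k)"
        by simp
    qed
    show "(\<lambda>k. P.nm (u k - u' k) * M2 + M1 * P.nm (v k - v' k)) \<longlonglongrightarrow> 0"
      using tendsto_add[OF tendsto_mult_left_zero[OF n1] tendsto_mult_right_zero[OF n2]] by simp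
  qed
  show ?thesis using tendsto_add[OF L D] by simp
qed



end


context rk begin
lemma approxU_add: "approxU f u \<Longrightarrow> approxU g v \<Longrightarrow> approxU (f + g) (\<lambda>k. u k + v k)"
  unfolding approxU_def
proof (intro conjI ballI)
  assume a: "P.cauchyS u \<and> (\<forall>z\<in>X. (\<lambda>k. u k z) \<longlonglongrightarrow> f z)" "P.cauchyS v \<and> (\<forall>z\<in>X. (\<lambda>k. v k z) \<longlonglongrightarrow> g z)"
  then show "P.cauchyS (\<lambda>k. u k + v k)" using P.cauchyS_add by blast
  fix z assume "z \<in> X"
  then have "(\<lambda>k. u k z + v k z) \<longlonglongrightarrow> f z + g z" using a by (intro tendsto_add) auto
  then show "(\<lambda>k. (u k + v k) z) \<longlonglongrightarrow> (f + g) z" by simp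
qed

lemma approxU_scale: "approxU f u \<Longrightarrow> approxU (c *\<^sub>R f) (\<lambda>k. c *\<^sub>R u k)"
  unfolding approxU_def
proof (intro conjI ballI)
  assume a: "P.cauchyS u \<and> (\<forall>z\<in>X. (\<lambda>k. u k z) \<longlonglongrightarrow> f z)"
  then show "P.cauchyS (\<lambda>k. c *\<^sub>R u k)" using P.cauchyS_scale by blast
  fix z assume "z \<in> X"
  then have "(\<lambda>k. c *\<^sub>R u k z) \<longlonglongrightarrow> c *\<^sub>R f z" using a by (intro tendsto_scaleR tendsto_const) auto
  then show "(\<lambda>k. (c *\<^sub>R u k) z) \<longlonglongrightarrow> (c *\<^sub>R f) z" by simp
qed

lemma approxU_const: "inP a \<Longrightarrow> approxU a (\<lambda>k. a)"
  unfolding approxU_def by (auto intro: P.cauchyS_const)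

lemma approxU_cong: "(\<And>z. z \<in> X \<Longrightarrow> g z = g' z) \<Longrightarrow> approxU g u \<longleftrightarrow> approxU g' u"
  unfolding approxU_def by auto

lemma inP_H: "inP a \<Longrightarrow> a \<in> rkhs X K"
  using approxU_const approxU_H by blast

lemma ipH_inP: "inP a \<Longrightarrow> inP b \<Longrightarrow> ipH a b = ipP a b"
proof -
  assume a: "inP a" and b: "inP b"
  have "(\<lambda>k. ipP a b) \<longlonglongrightarrow> ipH a b" by (rule ipH_lim[OF approxU_const[OF a] approxU_const[OF b]])
  then show ?thesis by (simp add: LIMSEQ_const_iff)
qed

sublocale H: semi_ip "rkhs X K" ipH
proof
  show "0 \<in> rkhs X K" using P.V0 inP_H by auto
next
  fix x y assume x: "x \<in> rkhs X K" and y: "y \<in> rkhs X K"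
  show "x + y \<in> rkhs X K" using approxU_add[OF useq[OF x] useq[OF y]] approxU_H by blast
next
  fix x and c :: real assume x: "x \<in> rkhs X K"
  show "c *\<^sub>R x \<in> rkhs X K" using approxU_scale[OF useq[OF x]] approxU_H by blast
next
  fix x y z assume x: "x \<in> rkhs X K" and y: "y \<in> rkhs X K" and z: "z \<in> rkhs X K"
  note u = useq[OF x] and v = useq[OF y] and w = useq[OF z]
  have 1: "(\<lambda>k. ipP (useq x k + useq y k) (useq z k)) \<longlonglongrightarrow> ipH (x + y) z"
    by (rule ipH_lim[OF approxU_add[OF u v] w])
  have "(\<lambda>k. ipP (useq x k) (useq z k) + ipP (useq y k) (useq z k)) \<longlonglongrightarrow> ipH x z + ipH y z"
    by (intro tendsto_add ipH_lim u v w)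
  moreover have "ipP (useq x k + useq y k) (useq z k) = ipP (useq x k) (useq z k) + ipP (useq y k) (useq z k)" for k
    using approxU_inP[OF u] approxU_inP[OF v] approxU_inP[OF w] by (intro P.ip_add) auto
  ultimately have 2: "(\<lambda>k. ipP (useq x k + useq y k) (useq z k)) \<longlonglongrightarrow> ipH x z + ipH y z" by simp
  show "ipH (x + y) z = ipH x z + ipH y z" by (rule LIMSEQ_unique[OF 1 2])
next
  fix x y and c :: real assume x: "x \<in> rkhs X K" and y: "y \<in> rkhs X K"
  note u = useq[OF x] and v = useq[OF y]
  have 1: "(\<lambda>k. ipP (c *\<^sub>R useq x k) (useq y k)) \<longlonglongrightarrow> ipH (c *\<^sub>R x) y"
    by (rule ipH_lim[OF approxU_scale[OF u] v])
  have "(\<lambda>k. c * ipP (useq x k) (useq y k)) \<longlonglongrightarrow> c * ipH x y"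
    by (intro tendsto_mult tendsto_const ipH_lim u v)
  moreover have "ipP (c *\<^sub>R useq x k) (useq y k) = c * ipP (useq x k) (useq y k)" for k
    using approxU_inP[OF u] approxU_inP[OF v] by (intro P.ip_scale) auto
  ultimately have 2: "(\<lambda>k. ipP (c *\<^sub>R useq x k) (useq y k)) \<longlonglongrightarrow> c * ipH x y" by simp
  show "ipH (c *\<^sub>R x) y = c * ipH x y" by (rule LIMSEQ_unique[OF 1 2])
next
  fix x y assume x: "x \<in> rkhs X K" and y: "y \<in> rkhs X K"
  note u = useq[OF x] and v = useq[OF y]
  have 1: "(\<lambda>k. ipP (useq x k) (useq y k)) \<longlonglongrightarrow> ipH x y" by (rule ipH_lim[OF u v])
  have 2: "(\<lambda>k. ipP (useq y k) (useq x k)) \<longlonglongrightarrow> ipH y x" by (rule ipH_lim[OF v u])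
  have "ipP (useq x k) (useq y k) = ipP (useq y k) (useq x k)" for k
    using approxU_inP[OF u] approxU_inP[OF v] by (intro P.ip_sym) auto
  then have 3: "(\<lambda>k. ipP (useq x k) (useq y k)) \<longlonglongrightarrow> ipH y x" using 2 by simp
  show "ipH x y = ipH y x" by (rule LIMSEQ_unique[OF 1 3])
next
  fix x assume x: "x \<in> rkhs X K"
  note u = useq[OF x]
  have 1: "(\<lambda>k. ipP (useq x k) (useq x k)) \<longlonglongrightarrow> ipH x x" by (rule ipH_lim[OF u u])
  have "0 \<le> ipP (useq x k) (useq x k)" for k using approxU_inP[OF u] by (intro P.ip_nonneg) auto
  then show "0 \<le> ipH x x" by (intro LIMSEQ_le_const[OF 1]) simp
qed

lemma ipH_kfun: "f \<in> rkhs X K \<Longrightarrow> inX G \<Longrightarrow> ipH f (kfun K G) = (\<Sum>(z,w)\<leftarrow>G. f z \<bullet> w)"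
proof -
  assume f: "f \<in> rkhs X K" and G: "inX G"
  note u = useq[OF f]
  have 1: "(\<lambda>k. ipP (useq f k) (kfun K G)) \<longlonglongrightarrow> ipH f (kfun K G)"
    by (rule ipH_lim[OF u approxU_const[OF inP_kfun[OF G]]])
  have "(\<lambda>k. \<Sum>(z,w)\<leftarrow>G. useq f k z \<bullet> w) \<longlonglongrightarrow> (\<Sum>(z,w)\<leftarrow>G. f z \<bullet> w)"
  proof (rule tendsto_sum_list_eval)
    fix z w assume "(z,w) \<in> set G"
    then have "z \<in> X" using G by (force simp: inX_def)
    then show "(\<lambda>l. useq f l z) \<longlonglongrightarrow> f z" using u by (simp add: approxU_def)
  qed
  moreover have "ipP (useq f k) (kfun K G) = (\<Sum>(z,w)\<leftarrow>G. useq f k z \<bullet> w)" for k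
    using approxU_inP[OF u] G by (rule ipP_eval)
  ultimately have 2: "(\<lambda>k. ipP (useq f k) (kfun K G)) \<longlonglongrightarrow> (\<Sum>(z,w)\<leftarrow>G. f z \<bullet> w)" by simp
  show ?thesis by (rule LIMSEQ_unique[OF 1 2])
qed

lemma ipH_single: "f \<in> rkhs X K \<Longrightarrow> z \<in> X \<Longrightarrow> ipH f (kfun K [(z,w)]) = f z \<bullet> w"
  by (simp add: ipH_kfun)

lemma H_kfun: "inX F \<Longrightarrow> kfun K F \<in> rkhs X K"
  by (rule inP_H[OF inP_kfun])

lemma ipH_kfun2: "inX F \<Longrightarrow> inX G \<Longrightarrow> ipH (kfun K F) (kfun K G) = kip K F G"
  by (simp add: ipH_inP inP_kfun ipP_kfun)

lemma H_cong: "(\<And>z. z \<in> X \<Longrightarrow> g z = g' z) \<Longrightarrow> g \<in> rkhs X K \<longleftrightarrow> g' \<in> rkhs X K"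
proof -
  assume e: "\<And>z. z \<in> X \<Longrightarrow> g z = g' z"
  have "approxU g = approxU g'" by (rule ext, rule approxU_cong[OF e])
  then show ?thesis unfolding rkhs_iff by simp
qed

lemma ipH_cong2: "f \<in> rkhs X K \<Longrightarrow> g \<in> rkhs X K \<Longrightarrow> (\<And>z. z \<in> X \<Longrightarrow> g z = g' z) \<Longrightarrow> ipH f g = ipH f g'"
proof -
  assume f: "f \<in> rkhs X K" and g: "g \<in> rkhs X K" and e: "\<And>z. z \<in> X \<Longrightarrow> g z = g' z"
  have g': "approxU g' (useq g)" using useq[OF g] approxU_cong[of g g', OF e] by blast
  have 1: "(\<lambda>k. ipP (useq f k) (useq g k)) \<longlonglongrightarrow> ipH f g" by (rule ipH_lim[OF useq[OF f] useq[OF g]])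
  have 2: "(\<lambda>k. ipP (useq f k) (useq g k)) \<longlonglongrightarrow> ipH f g'" by (rule ipH_lim[OF useq[OF f] g'])
  show ?thesis by (rule LIMSEQ_unique[OF 1 2])
qed

lemma norm2_eq: "f \<in> rkhs X K \<Longrightarrow> rkhs_norm2 X K f = ipH f f"
proof -
  assume f: "f \<in> rkhs X K"
  have lim: "(\<lambda>k. kip K (Fs k) (Fs k)) \<longlonglongrightarrow> ipH f f" if Fs: "rkhs_approx X K f Fs" for Fs
  proof -
    have inX: "\<And>k. inX (Fs k)" using Fs by (simp add: rkhs_approx_def inX_def)
    have "(\<lambda>k. ipP (kfun K (Fs k)) (kfun K (Fs k))) \<longlonglongrightarrow> ipH f f"
      using ipH_lim[OF rkhs_approx_U[OF Fs] rkhs_approx_U[OF Fs]] .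
    then show ?thesis using inX by (simp add: ipP_kfun)
  qed
  obtain Fs where Fs: "rkhs_approx X K f Fs" using f by (auto simp: rkhs_def)
  have ex: "\<exists>c. \<exists>Fs. rkhs_approx X K f Fs \<and> (\<lambda>k. kip K (Fs k) (Fs k)) \<longlonglongrightarrow> c"
    using Fs lim[OF Fs] by (intro exI conjI)
  have "\<exists>Fs. rkhs_approx X K f Fs \<and> (\<lambda>k. kip K (Fs k) (Fs k)) \<longlonglongrightarrow> rkhs_norm2 X K f"
    unfolding rkhs_norm2_def using someI_ex[OF ex] .
  then obtain Gs where G1: "rkhs_approx X K f Gs" and G2: "(\<lambda>k. kip K (Gs k) (Gs k)) \<longlonglongrightarrow> rkhs_norm2 X K f" by blast
  show ?thesis by (rule LIMSEQ_unique[OF G2 lim[OF G1]])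
qed

lemma ipH_approx:
  assumes g: "approxU g v" and f: "f \<in> rkhs X K"
  shows "(\<lambda>k. ipH f (v k)) \<longlonglongrightarrow> ipH f g"
proof -
  have vP: "\<And>k. inP (v k)" using g by (rule approxU_inP)
  have vH: "\<And>k. v k \<in> rkhs X K" using vP by (rule inP_H)
  have gH: "g \<in> rkhs X K" using g by (rule approxU_H)
  have cv: "P.cauchyS v" using g by (rule approxU_cauchy)
  have null: "(\<lambda>k. ipH (g - v k) (g - v k)) \<longlonglongrightarrow> 0"
  proof (rule LIMSEQ_I)
    fix e :: real assume e: "e > 0"
    have e2: "e/2 > 0" using e by simp
    obtain N where N: "\<forall>k\<ge>N. \<forall>l\<ge>N. ipP (v k - v l) (v k - v l) < e/2"
      using cv e2 unfolding P.cauchyS_def by blast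
    show "\<exists>N. \<forall>k\<ge>N. norm (ipH (g - v k) (g - v k) - 0) < e"
    proof (intro exI[of _ N] allI impI)
      fix k assume k: "N \<le> k"
      have a: "approxU (g - v k) (\<lambda>l. v l - v k)"
        using approxU_add[OF g approxU_scale[OF approxU_const[OF vP[of k]], of "-1"]]
        by (simp only: scaleR_minus1_left diff_conv_add_uminus)
      have 1: "(\<lambda>l. ipP (v l - v k) (v l - v k)) \<longlonglongrightarrow> ipH (g - v k) (g - v k)" by (rule ipH_lim[OF a a])
      have "\<forall>l\<ge>N. ipP (v l - v k) (v l - v k) \<le> e/2" using N k by (simp add: less_imp_le)
      then have "ipH (g - v k) (g - v k) \<le> e/2"
        by (intro LIMSEQ_le_const2[OF 1] exI[of _ N])
      moreover have "0 \<le> ipH (g - v k) (g - v k)" using gH vH by (intro H.ip_nonneg H.Vdiff)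
      ultimately show "norm (ipH (g - v k) (g - v k) - 0) < e" using e by simp
    qed
  qed
  have "(\<lambda>k. ipH f (g - v k)) \<longlonglongrightarrow> 0"
  proof (rule Lim_null_comparison)
    show "\<forall>\<^sub>F k in sequentially. norm (ipH f (g - v k)) \<le> H.nm f * H.nm (g - v k)"
    proof (rule always_eventually, rule allI)
      fix k show "norm (ipH f (g - v k)) \<le> H.nm f * H.nm (g - v k)" using H.CS_abs[OF f H.Vdiff[OF gH vH[of k]]] by simp
    qed
    have "(\<lambda>k. H.nm (g - v k)) \<longlonglongrightarrow> 0" unfolding H.nm_def using tendsto_real_sqrt[OF tendsto_rabs[OF null]] by simp
    then show "(\<lambda>k. H.nm f * H.nm (g - v k)) \<longlonglongrightarrow> 0" by (rule tendsto_mult_right_zero)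
  qed
  then have 2: "(\<lambda>k. ipH f g - ipH f (g - v k)) \<longlonglongrightarrow> ipH f g - 0" by (intro tendsto_diff tendsto_const)
  moreover have "ipH f (v k) = ipH f g - ipH f (g - v k)" for k using f gH vH by (simp add: H.ip_diff2)
  ultimately show ?thesis by simp
qed

lemma H_null: "f \<in> rkhs X K \<Longrightarrow> ipH f f = 0 \<Longrightarrow> z \<in> X \<Longrightarrow> f z = 0"
proof -
  assume f: "f \<in> rkhs X K" and n: "ipH f f = 0" and z: "z \<in> X"
  have k: "kfun K [(z, f z)] \<in> rkhs X K" by (rule H_kfun) (simp add: z)
  have "ipH f (kfun K [(z, f z)]) = 0" by (rule H.ip_null[OF f k n])
  then have "f z \<bullet> f z = 0" using ipH_single[OF f z, of "f z"] by (simp only:)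
  then show ?thesis by (simp only: inner_eq_zero_iff)
qed

end



lemma dq_lim:
  assumes f: "(f has_derivative f') (at x)" and t: "t \<longlonglongrightarrow> 0" and tnz: "\<And>k. t k \<noteq> 0"
  shows "(\<lambda>k. (1 / t k) *\<^sub>R (f (x + t k *\<^sub>R v) - f x)) \<longlonglongrightarrow> f' v"
proof (rule LIMSEQ_I)
  fix e :: real assume e: "e > 0"
  have bl: "bounded_linear f'" using f by (simp add: has_derivative_at_alt)
  define e' where "e' = e / (norm v + 1)"
  have e': "e' > 0" using e by (simp add: e'_def add_nonneg_pos)
  obtain d where d: "d > 0" and hd: "\<And>y. norm (y - x) < d \<Longrightarrow> norm (f y - f x - f' (y - x)) \<le> e' * norm (y - x)"
    using f e' unfolding has_derivative_at_alt by blast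
  have d': "d / (norm v + 1) > 0" using d by (simp add: add_nonneg_pos)
  obtain N where N: "\<And>k. k \<ge> N \<Longrightarrow> norm (t k) < d / (norm v + 1)"
    using LIMSEQ_D[OF t d'] by auto
  show "\<exists>N. \<forall>k\<ge>N. norm ((1 / t k) *\<^sub>R (f (x + t k *\<^sub>R v) - f x) - f' v) < e"
  proof (intro exI[of _ N] allI impI)
    fix k assume k: "k \<ge> N"
    have tk: "\<bar>t k\<bar> < d / (norm v + 1)" using N[OF k] by simp
    have "\<bar>t k\<bar> * norm v \<le> \<bar>t k\<bar> * (norm v + 1)" by (simp add: mult_left_mono)
    also have "\<dots> < d" using tk by (simp add: pos_less_divide_eq add_nonneg_pos)
    finally have ny: "norm ((x + t k *\<^sub>R v) - x) < d" by simp
    have lin: "f' (t k *\<^sub>R v) = t k *\<^sub>R f' v" using bl by (simp add: linear.scaleR bounded_linear.linear)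
    have "(1 / t k) *\<^sub>R (f (x + t k *\<^sub>R v) - f x) - f' v = (1 / t k) *\<^sub>R (f (x + t k *\<^sub>R v) - f x - f' (t k *\<^sub>R v))"
      using tnz[of k] by (simp add: lin scaleR_diff_right)
    then have "norm ((1 / t k) *\<^sub>R (f (x + t k *\<^sub>R v) - f x) - f' v) = (1 / \<bar>t k\<bar>) * norm (f (x + t k *\<^sub>R v) - f x - f' (t k *\<^sub>R v))"
      by simp
    also have "\<dots> \<le> (1 / \<bar>t k\<bar>) * (e' * norm ((x + t k *\<^sub>R v) - x))"
      using hd[OF ny] by (intro mult_left_mono) auto
    also have "\<dots> = e' * norm v" using tnz[of k] by simp
    also have "\<dots> = e * (norm v / (norm v + 1))" by (simp add: e'_def)
    also have "\<dots> < e * 1"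
    proof (rule mult_strict_left_mono[OF _ e])
      show "norm v / (norm v + 1) < 1" by (subst divide_less_eq_1_pos) (auto simp: add_nonneg_pos)
    qed
    finally show "norm ((1 / t k) *\<^sub>R (f (x + t k *\<^sub>R v) - f x) - f' v) < e" by simp
  qed
qed

definition fam :: "real^'n \<Rightarrow> ((real^'n) \<times> real) list \<Rightarrow> ((real^'n) \<times> (real^'n)) list" where
  "fam w L = map (\<lambda>(a,c). (a, c *\<^sub>R w)) L"

lemma fam_simps[simp]: "fam w [] = []" "fam w ((a,c)#L) = (a, c *\<^sub>R w) # fam w L" "fam w (L1 @ L2) = fam w L1 @ fam w L2"
  by (simp_all add: fam_def)

lemma fam_diff_fam: "fam_diff (fam w L1) (fam w L2) = fam w (L1 @ map (\<lambda>(a,c). (a, -c)) L2)"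
  by (induction L2) (auto simp: fam_diff_def fam_def)

lemma (in rk) inX_fam: "inX (fam w L) \<longleftrightarrow> (\<forall>(a,c)\<in>set L. a \<in> X)"
  by (induction L) auto


lemma abs_sum_list_le:
  fixes f g :: "'a \<Rightarrow> real"
  shows "(\<And>p. p \<in> set L \<Longrightarrow> \<bar>f p\<bar> \<le> g p) \<Longrightarrow> \<bar>sum_list (map f L)\<bar> \<le> sum_list (map g L)"
proof (induction L)
  case (Cons a L)
  have "\<bar>f a + sum_list (map f L)\<bar> \<le> \<bar>f a\<bar> + \<bar>sum_list (map f L)\<bar>" by (rule abs_triangle_ineq)
  also have "\<dots> \<le> g a + sum_list (map g L)" using Cons by (intro add_mono) auto
  finally show ?case by simp
qed simp

lemma sum_list_lin_split:
  fixes T :: "real^'n \<Rightarrow> real"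
  assumes T: "linear T"
  shows "(\<Sum>(a,c)\<leftarrow>L. c * (A a c + B + T (a - x))) = (\<Sum>(a,c)\<leftarrow>L. c * A a c) + (\<Sum>(a,c)\<leftarrow>L. c) * B + T (\<Sum>(a,c)\<leftarrow>L. c *\<^sub>R (a - x))"
proof (induction L)
  case Nil
  then show ?case using linear_0[OF T] by simp
next
  case (Cons p L)
  obtain a c where p: "p = (a,c)" by force
  have "T (c *\<^sub>R (a - x) + (\<Sum>(a,c)\<leftarrow>L. c *\<^sub>R (a - x))) = c * T (a - x) + T (\<Sum>(a,c)\<leftarrow>L. c *\<^sub>R (a - x))"
    using T by (simp add: linear_add linear_scale)
  then show ?case using Cons by (simp add: p algebra_simps)
qed

lemma sum_list_fam: "(\<Sum>(z,u)\<leftarrow>fam w L. f z u) = (\<Sum>(b,d)\<leftarrow>L. f b (d *\<^sub>R w))"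
  by (induction L) auto

lemma kfun_fam_inner: "kfun K (fam w L) r \<bullet> w = (\<Sum>(a,c)\<leftarrow>L. c * ((K r a *v w) \<bullet> w))"
  by (induction L) (auto simp: inner_add_left matrix_vector_mult_scaleR)

lemma ell_bl: "bounded_linear (\<lambda>M::real^'n^'n. (M *v w) \<bullet> w)"
proof -
  have "linear (\<lambda>M::real^'n^'n. (M *v w) \<bullet> w)"
    by (rule linearI) (auto simp: matrix_vector_mult_add_rdistrib inner_add_left scaleR_matrix_vector_assoc[symmetric])
  then show ?thesis by (simp add: linear_conv_bounded_linear)
qed


lemma sum_fun_apply: "(\<Sum>a\<in>A. (f a :: 'b \<Rightarrow> 'c::comm_monoid_add)) z = (\<Sum>a\<in>A. f a z)"
  by (induction A rule: infinite_finite_induct) auto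

lemma mv_neg: "(A::real^'n^'m) *v (- x) = - (A *v x)"
  using matrix_vector_mult_scaleR[of A "-1" x] by simp

lemma mv_bl: "bounded_linear (\<lambda>M::real^'n^'n. M *v w)"
proof -
  have "linear (\<lambda>M::real^'n^'n. M *v w)"
    by (rule linearI) (auto simp: matrix_vector_mult_add_rdistrib scaleR_matrix_vector_assoc[symmetric])
  then show ?thesis by (simp add: linear_conv_bounded_linear)
qed

locale rk2 = rk X K for X :: "(real^'n) set" and K +
  fixes D :: "(real^'n) \<times> (real^'n) \<Rightarrow> ((real^'n) \<times> (real^'n)) \<Rightarrow>\<^sub>L (real^'n^'n)"
    and D2 :: "(real^'n) \<times> (real^'n) \<Rightarrow> ((real^'n) \<times> (real^'n)) \<Rightarrow>\<^sub>L (((real^'n) \<times> (real^'n)) \<Rightarrow>\<^sub>L (real^'n^'n))"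
  assumes openX: "open X"
    and hD: "\<And>p. p \<in> X \<times> X \<Longrightarrow> ((\<lambda>(r,s). K r s) has_derivative blinfun_apply (D p)) (at p)"
    and hD2: "\<And>p. p \<in> X \<times> X \<Longrightarrow> (D has_derivative blinfun_apply (D2 p)) (at p)"
    and cD2: "continuous_on (X \<times> X) D2"
begin

lemma dK_s: "r \<in> X \<Longrightarrow> s \<in> X \<Longrightarrow> ((\<lambda>s'. K r s') has_derivative (\<lambda>\<beta>. D (r,s) (0,\<beta>))) (at s)"
proof -
  assume r: "r \<in> X" and s: "s \<in> X"
  have 1: "((\<lambda>s'. (r, s')) has_derivative (\<lambda>\<beta>. (0, \<beta>))) (at s)"
    by (intro derivative_eq_intros) auto
  have 2: "((\<lambda>(r,s). K r s) has_derivative blinfun_apply (D (r,s))) (at (r,s))" using hD r s by auto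
  show ?thesis using has_derivative_compose[OF 1 2] by simp
qed

lemma dK_r: "r \<in> X \<Longrightarrow> s \<in> X \<Longrightarrow> ((\<lambda>r'. K r' s) has_derivative (\<lambda>\<alpha>. D (r,s) (\<alpha>,0))) (at r)"
proof -
  assume r: "r \<in> X" and s: "s \<in> X"
  have 1: "((\<lambda>r'. (r', s)) has_derivative (\<lambda>\<alpha>. (\<alpha>, 0))) (at r)"
    by (intro derivative_eq_intros) auto
  have 2: "((\<lambda>(r,s). K r s) has_derivative blinfun_apply (D (r,s))) (at (r,s))" using hD r s by auto
  show ?thesis using has_derivative_compose[OF 1 2] by simp
qed

lemma dD_s: "r \<in> X \<Longrightarrow> s \<in> X \<Longrightarrow> ((\<lambda>s'. D (r,s')) has_derivative (\<lambda>\<beta>. D2 (r,s) (0,\<beta>))) (at s)"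
proof -
  assume r: "r \<in> X" and s: "s \<in> X"
  have 1: "((\<lambda>s'. (r, s')) has_derivative (\<lambda>\<beta>. (0, \<beta>))) (at s)"
    by (intro derivative_eq_intros) auto
  have 2: "(D has_derivative blinfun_apply (D2 (r,s))) (at (r,s))" using hD2 r s by auto
  show ?thesis using has_derivative_compose[OF 1 2] by simp
qed


lemma D_lin:
  assumes x: "x \<in> X" and e: "e > 0"
  shows "\<exists>\<delta>>0. ball x \<delta> \<subseteq> X \<and> (\<forall>\<xi>\<in>ball x \<delta>. \<forall>a\<in>ball x \<delta>.
           norm (D (\<xi>,a) - D (\<xi>,x) - D2 (\<xi>,x) (0, a - x)) \<le> e * norm (a - x))"
proof -
  have "isCont D2 (x,x)" using cD2 openX x by (simp add: continuous_on_eq_continuous_at open_Times)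
  then obtain d where d: "d > 0" and hd: "\<And>p. dist p (x,x) < d \<Longrightarrow> dist (D2 p) (D2 (x,x)) < e/2"
    unfolding continuous_at_eps_delta using e by (meson half_gt_zero)
  obtain d0 where d0: "d0 > 0" "ball x d0 \<subseteq> X" using openX x by (meson openE)
  define \<delta> where "\<delta> = min (d/2) d0"
  have \<delta>: "\<delta> > 0" using d d0 by (simp add: \<delta>_def)
  have bX: "ball x \<delta> \<subseteq> X" using d0 by (auto simp: \<delta>_def)
  have "\<delta> \<le> d/2" by (simp add: \<delta>_def)
  have close: "norm (D2 (\<xi>,s) - D2 (\<xi>,x)) < e" if \<xi>: "\<xi> \<in> ball x \<delta>" and s: "s \<in> ball x \<delta>" for \<xi> s
  proof -
    have n1: "norm (\<xi> - x) < \<delta>" "norm (s - x) < \<delta>" using \<xi> s by (auto simp: dist_norm norm_minus_commute)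
    have "dist (\<xi>,s) (x,x) \<le> norm (\<xi> - x) + norm (s - x)"
      unfolding dist_norm using norm_Pair_le[of "\<xi> - x" "s - x"] by simp
    then have a: "dist (\<xi>,s) (x,x) < d" using n1 by (simp add: \<delta>_def)
    have "dist (\<xi>,x) (x,x) \<le> norm (\<xi> - x) + norm (x - x)"
      unfolding dist_norm using norm_Pair_le[of "\<xi> - x" "x - x"] by simp
    moreover have "norm (\<xi> - x) < d" using n1 norm_ge_zero[of "\<xi> - x"] \<open>\<delta> \<le> d/2\<close> by linarith
    ultimately have b: "dist (\<xi>,x) (x,x) < d" by simp
    have "norm (D2 (\<xi>,s) - D2 (\<xi>,x)) \<le> dist (D2 (\<xi>,s)) (D2 (x,x)) + dist (D2 (\<xi>,x)) (D2 (x,x))"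
      by (metis dist_commute dist_norm dist_triangle)
    also have "\<dots> < e/2 + e/2" using hd[OF a] hd[OF b] by simp
    finally show ?thesis by simp
  qed
  show ?thesis
  proof (intro exI[of _ \<delta>] conjI \<delta> bX ballI)
    fix \<xi> a assume \<xi>: "\<xi> \<in> ball x \<delta>" and a: "a \<in> ball x \<delta>"
    have \<xi>X: "\<xi> \<in> X" using \<xi> bX by auto
    have "norm ((\<lambda>s. D (\<xi>,s)) a - (\<lambda>s. D (\<xi>,s)) x - (\<lambda>\<beta>. D2 (\<xi>,x) (0,\<beta>)) (a - x)) \<le> norm (a - x) * e"
    proof (rule differentiable_bound_linearization[where S="ball x \<delta>" and f'="\<lambda>s \<beta>. D2 (\<xi>,s) (0,\<beta>)"])
      fix t :: real assume t: "t \<in> {0..1}"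
      have "norm (x + t *\<^sub>R (a - x) - x) = t * norm (a - x)" using t by simp
      also have "\<dots> \<le> norm (a - x)" using t by (simp add: mult_left_le_one_le)
      also have "\<dots> < \<delta>" using a by (simp add: dist_norm norm_minus_commute)
      finally show "x + t *\<^sub>R (a - x) \<in> ball x \<delta>" by (simp add: dist_norm norm_minus_commute)
    next
      fix s assume s: "s \<in> ball x \<delta>"
      then have "s \<in> X" using bX by auto
      then show "((\<lambda>s. D (\<xi>,s)) has_derivative (\<lambda>\<beta>. D2 (\<xi>,s) (0,\<beta>))) (at s within ball x \<delta>)"
        using dD_s[OF \<xi>X] has_derivative_at_withinI by blast
    next
      fix s assume s: "s \<in> ball x \<delta>"
      show "onorm ((\<lambda>\<beta>. D2 (\<xi>,s) (0,\<beta>)) - (\<lambda>\<beta>. D2 (\<xi>,x) (0,\<beta>))) \<le> e"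
      proof (rule onorm_le)
        fix \<beta> :: "real^'n"
        have "norm (((\<lambda>\<beta>. D2 (\<xi>,s) (0,\<beta>)) - (\<lambda>\<beta>. D2 (\<xi>,x) (0,\<beta>))) \<beta>) = norm ((D2 (\<xi>,s) - D2 (\<xi>,x)) (0,\<beta>))"
          by (simp add: blinfun.bilinear_simps)
        also have "\<dots> \<le> norm (D2 (\<xi>,s) - D2 (\<xi>,x)) * norm ((0::real^'n), \<beta>)" by (rule norm_blinfun)
        also have "\<dots> = norm (D2 (\<xi>,s) - D2 (\<xi>,x)) * norm \<beta>" by (simp add: norm_Pair)
        also have "\<dots> \<le> e * norm \<beta>" using close[OF \<xi> s] by (intro mult_right_mono) auto
        finally show "norm (((\<lambda>\<beta>. D2 (\<xi>,s) (0,\<beta>)) - (\<lambda>\<beta>. D2 (\<xi>,x) (0,\<beta>))) \<beta>) \<le> e * norm \<beta>" .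
      qed
    next
      show "x \<in> ball x \<delta>" using \<delta> by simp
    qed
    then show "norm (D (\<xi>,a) - D (\<xi>,x) - D2 (\<xi>,x) (0, a - x)) \<le> e * norm (a - x)" by (simp add: mult.commute)
  qed
qed


lemma G_deriv:
  fixes lf :: "real^'n^'n \<Rightarrow> real"
  assumes bl: "bounded_linear lf" and r: "r \<in> X"
  shows "(\<forall>(a,c)\<in>set L. a \<in> X) \<Longrightarrow> ((\<lambda>r. \<Sum>(a,c)\<leftarrow>L. c * lf (K r a)) has_derivative (\<lambda>\<alpha>. \<Sum>(a,c)\<leftarrow>L. c * lf (D (r,a) (\<alpha>,0)))) (at r)"
proof (induction L)
  case Nil
  then show ?case by simp
next
  case (Cons p L)
  obtain a c where p: "p = (a,c)" by force
  have a: "a \<in> X" using Cons.prems p by auto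
  have 1: "((\<lambda>r. c * lf (K r a)) has_derivative (\<lambda>\<alpha>. c * lf (D (r,a) (\<alpha>,0)))) (at r)"
    by (rule has_derivative_mult_right[OF bounded_linear.has_derivative[OF bl dK_r[OF r a]]])
  have 2: "((\<lambda>r. \<Sum>(a,c)\<leftarrow>L. c * lf (K r a)) has_derivative (\<lambda>\<alpha>. \<Sum>(a,c)\<leftarrow>L. c * lf (D (r,a) (\<alpha>,0)))) (at r)"
    using Cons by auto
  show ?case using has_derivative_add[OF 1 2] by (simp add: p)
qed

lemma fam_bound:
  assumes x: "x \<in> X" and e: "e > 0"
  shows "\<exists>\<delta>>0. ball x \<delta> \<subseteq> X \<and> (\<forall>L. (\<Sum>(a,c)\<leftarrow>L. c) = 0 \<longrightarrow> (\<Sum>(a,c)\<leftarrow>L. c *\<^sub>R (a - x)) = 0 \<longrightarrow>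
           (\<forall>(a,c)\<in>set L. a \<in> ball x \<delta>) \<longrightarrow>
           kip K (fam w L) (fam w L) \<le> e * (\<Sum>(a,c)\<leftarrow>L. \<bar>c\<bar> * norm (a - x))^2)"
proof -
  define lf where "lf = (\<lambda>M::real^'n^'n. (M *v w) \<bullet> w)"
  have bl: "bounded_linear lf" unfolding lf_def by (rule ell_bl)
  obtain C where C: "C > 0" "\<And>M. norm (lf M) \<le> norm M * C" using bounded_linear.pos_bounded[OF bl] by blast
  define e1 where "e1 = e / (2 * C)"
  have e1: "e1 > 0" using e C by (simp add: e1_def)
  obtain \<delta> where \<delta>: "\<delta> > 0" "ball x \<delta> \<subseteq> X"
    and lin: "\<And>\<xi> a. \<xi> \<in> ball x \<delta> \<Longrightarrow> a \<in> ball x \<delta> \<Longrightarrow> norm (D (\<xi>,a) - D (\<xi>,x) - D2 (\<xi>,x) (0, a - x)) \<le> e1 * norm (a - x)"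
    using D_lin[OF x e1] by blast
  show ?thesis
  proof (intro exI[of _ \<delta>] conjI \<delta> allI impI)
    fix L :: "((real^'n) \<times> real) list"
    assume s0: "(\<Sum>(a,c)\<leftarrow>L. c) = 0" and s1: "(\<Sum>(a,c)\<leftarrow>L. c *\<^sub>R (a - x)) = 0"
      and inb: "\<forall>(a,c)\<in>set L. a \<in> ball x \<delta>"
    define S where "S = ball x \<delta>"
    define \<Sigma> where "\<Sigma> = (\<Sum>(a,c)\<leftarrow>L. \<bar>c\<bar> * norm (a - x))"
    have \<Sigma>0: "\<Sigma> \<ge> 0" unfolding \<Sigma>_def by (intro sum_list_nonneg) auto
    define G where "G = (\<lambda>r. \<Sum>(a,c)\<leftarrow>L. c * lf (K r a))"
    define G' where "G' = (\<lambda>r \<alpha>. \<Sum>(a,c)\<leftarrow>L. c * lf (D (r,a) (\<alpha>,0)))"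
    have inX: "\<forall>(a,c)\<in>set L. a \<in> X"
    proof (clarify)
      fix a c assume "(a,c) \<in> set L"
      then have "a \<in> ball x \<delta>" using inb by auto
      then show "a \<in> X" using \<delta> by auto
    qed
    have xS: "x \<in> S" using \<delta> by (simp add: S_def)
    have SX: "S \<subseteq> X" using \<delta> by (simp add: S_def)
    have Gd: "(G has_derivative G' r) (at r)" if "r \<in> X" for r
      unfolding G_def G'_def by (rule G_deriv[OF bl that inX])
    have G'lin: "linear (G' r)" if "r \<in> X" for r
      using Gd[OF that] has_derivative_bounded_linear bounded_linear.linear by blast
    have G'bound: "\<bar>G' \<xi> \<alpha>\<bar> \<le> (C * e1 * norm \<alpha>) * \<Sigma>" if \<xi>: "\<xi> \<in> S" for \<xi> \<alpha>
    proof -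
      define T where "T = (\<lambda>u. lf (D2 (\<xi>,x) (0,u) (\<alpha>,0)))"
      have Tlin: "linear T" unfolding T_def
      proof (rule linearI)
        fix b1 b2 :: "real^'n"
        have "(0::real^'n, b1 + b2) = (0,b1) + (0,b2)" by simp
        then have "D2 (\<xi>,x) (0, b1 + b2) = D2 (\<xi>,x) (0,b1) + D2 (\<xi>,x) (0,b2)" by (metis blinfun.add_right)
        then show "lf (D2 (\<xi>,x) (0, b1 + b2) (\<alpha>,0)) = lf (D2 (\<xi>,x) (0, b1) (\<alpha>,0)) + lf (D2 (\<xi>,x) (0, b2) (\<alpha>,0))"
          by (simp add: blinfun.add_left linear_add[OF bounded_linear.linear[OF bl]])
      next
        fix r :: real and b :: "real^'n"
        have "(0::real^'n, r *\<^sub>R b) = r *\<^sub>R (0,b)" by simp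
        then have "D2 (\<xi>,x) (0, r *\<^sub>R b) = r *\<^sub>R D2 (\<xi>,x) (0,b)" by (metis blinfun.scaleR_right)
        then show "lf (D2 (\<xi>,x) (0, r *\<^sub>R b) (\<alpha>,0)) = r *\<^sub>R lf (D2 (\<xi>,x) (0, b) (\<alpha>,0))"
          by (simp add: blinfun.scaleR_left linear_scale[OF bounded_linear.linear[OF bl]])
      qed
      define E where "E = (\<lambda>a. D (\<xi>,a) - D (\<xi>,x) - D2 (\<xi>,x) (0, a - x))"
      have elt: "c * lf (D (\<xi>,a) (\<alpha>,0)) = c * (lf (E a (\<alpha>,0)) + lf (D (\<xi>,x) (\<alpha>,0)) + T (a - x))" for a c
      proof -
        have "D (\<xi>,a) = E a + D (\<xi>,x) + D2 (\<xi>,x) (0, a - x)" by (simp add: E_def)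
        then have "D (\<xi>,a) (\<alpha>,0) = E a (\<alpha>,0) + D (\<xi>,x) (\<alpha>,0) + D2 (\<xi>,x) (0, a - x) (\<alpha>,0)"
          by (metis blinfun.add_left)
        then show ?thesis unfolding T_def
          using linear_add[OF bounded_linear.linear[OF bl]] by simp
      qed
      have "G' \<xi> \<alpha> = (\<Sum>(a,c)\<leftarrow>L. c * (lf (E a (\<alpha>,0)) + lf (D (\<xi>,x) (\<alpha>,0)) + T (a - x)))"
        unfolding G'_def by (intro arg_cong[where f=sum_list] map_cong refl) (auto simp: elt)
      also have "\<dots> = (\<Sum>(a,c)\<leftarrow>L. c * lf (E a (\<alpha>,0)))"
        using sum_list_lin_split[OF Tlin, of "\<lambda>a c. lf (E a (\<alpha>,0))" "lf (D (\<xi>,x) (\<alpha>,0))" x L] s0 s1 linear_0[OF Tlin]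
        by simp
      finally have eq: "G' \<xi> \<alpha> = (\<Sum>(a,c)\<leftarrow>L. c * lf (E a (\<alpha>,0)))" .
      have "\<bar>\<Sum>(a,c)\<leftarrow>L. c * lf (E a (\<alpha>,0))\<bar> \<le> (\<Sum>(a,c)\<leftarrow>L. (C * e1 * norm \<alpha>) * (\<bar>c\<bar> * norm (a - x)))"
      proof (rule abs_sum_list_le)
        fix p assume p: "p \<in> set L"
        obtain a c where pac: "p = (a,c)" by force
        have aS: "a \<in> ball x \<delta>" using inb p pac by auto
        have "\<bar>lf (E a (\<alpha>,0))\<bar> \<le> norm (E a (\<alpha>,0)) * C" using C(2)[of "E a (\<alpha>,0)"] by simp
        also have "\<dots> \<le> (norm (E a) * norm (\<alpha>, (0::real^'n))) * C" using C by (intro mult_right_mono norm_blinfun) auto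
        also have "\<dots> = norm (E a) * norm \<alpha> * C" by (simp add: norm_Pair)
        also have "\<dots> \<le> (e1 * norm (a - x)) * norm \<alpha> * C"
          using lin[OF _ aS] \<xi> C by (intro mult_right_mono) (auto simp: E_def S_def)
        finally have "\<bar>lf (E a (\<alpha>,0))\<bar> \<le> e1 * norm (a - x) * norm \<alpha> * C" .
        then have "\<bar>c\<bar> * \<bar>lf (E a (\<alpha>,0))\<bar> \<le> \<bar>c\<bar> * (e1 * norm (a - x) * norm \<alpha> * C)"
          by (intro mult_left_mono) auto
        then show "\<bar>case p of (a,c) \<Rightarrow> c * lf (E a (\<alpha>,0))\<bar> \<le> (case p of (a,c) \<Rightarrow> (C * e1 * norm \<alpha>) * (\<bar>c\<bar> * norm (a - x)))"
          by (simp add: pac abs_mult algebra_simps)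
      qed
      also have "\<dots> = (C * e1 * norm \<alpha>) * \<Sigma>" unfolding \<Sigma>_def
        by (simp add: sum_list_const_mult split_def)
      finally show ?thesis using eq by simp
    qed
    have onb: "onorm (G' \<xi> - G' x) \<le> 2 * C * e1 * \<Sigma>" if \<xi>: "\<xi> \<in> S" for \<xi>
    proof (rule onorm_le)
      fix \<alpha>
      have "norm ((G' \<xi> - G' x) \<alpha>) \<le> \<bar>G' \<xi> \<alpha>\<bar> + \<bar>G' x \<alpha>\<bar>" by simp
      also have "\<dots> \<le> (C * e1 * norm \<alpha>) * \<Sigma> + (C * e1 * norm \<alpha>) * \<Sigma>"
        using G'bound[OF \<xi>] G'bound[OF xS] by (intro add_mono)
      finally show "norm ((G' \<xi> - G' x) \<alpha>) \<le> 2 * C * e1 * \<Sigma> * norm \<alpha>" by (simp add: algebra_simps)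
    qed
    have Rb: "\<bar>G b - G x - G' x (b - x)\<bar> \<le> norm (b - x) * (2 * C * e1 * \<Sigma>)" if b: "b \<in> S" for b
    proof -
      have "norm (G b - G x - G' x (b - x)) \<le> norm (b - x) * (2 * C * e1 * \<Sigma>)"
      proof (rule differentiable_bound_linearization[where S=S and f'=G'])
        fix t :: real assume t: "t \<in> {0..1}"
        have "norm (x + t *\<^sub>R (b - x) - x) = t * norm (b - x)" using t by simp
        also have "\<dots> \<le> norm (b - x)" using t by (simp add: mult_left_le_one_le)
        also have "\<dots> < \<delta>" using b by (simp add: S_def dist_norm norm_minus_commute)
        finally show "x + t *\<^sub>R (b - x) \<in> S" by (simp add: S_def dist_norm norm_minus_commute)
      next
        fix r assume "r \<in> S"
        then show "(G has_derivative G' r) (at r within S)" using Gd SX has_derivative_at_withinI by blast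
      next
        fix r assume "r \<in> S"
        then show "onorm (G' r - G' x) \<le> 2 * C * e1 * \<Sigma>" by (rule onb)
      qed (rule xS)
      then show ?thesis by simp
    qed
    have kipG: "kip K (fam w L) (fam w L) = (\<Sum>(b,d)\<leftarrow>L. d * G b)"
    proof -
      have iF: "inX (fam w L)" using inX by (simp add: inX_fam)
      have "kip K (fam w L) (fam w L) = (\<Sum>(z,u)\<leftarrow>fam w L. kfun K (fam w L) z \<bullet> u)" by (rule kip_eval[OF iF iF])
      also have "\<dots> = (\<Sum>(b,d)\<leftarrow>L. kfun K (fam w L) b \<bullet> (d *\<^sub>R w))" by (rule sum_list_fam)
      also have "\<dots> = (\<Sum>(b,d)\<leftarrow>L. d * G b)"
        by (intro arg_cong[where f=sum_list] map_cong refl) (auto simp: G_def kfun_fam_inner lf_def)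
      finally show ?thesis .
    qed
    have "(\<Sum>(b,d)\<leftarrow>L. d * G b) = (\<Sum>(b,d)\<leftarrow>L. d * ((G b - G x - G' x (b - x)) + G x + G' x (b - x)))"
      by simp
    also have "\<dots> = (\<Sum>(b,d)\<leftarrow>L. d * (G b - G x - G' x (b - x)))"
      using sum_list_lin_split[OF G'lin[OF x], of "\<lambda>b d. G b - G x - G' x (b - x)" "G x" x L] s0 s1 linear_0[OF G'lin[OF x]]
      by simp
    also have "\<dots> \<le> \<bar>\<Sum>(b,d)\<leftarrow>L. d * (G b - G x - G' x (b - x))\<bar>" by simp
    also have "\<dots> \<le> (\<Sum>(b,d)\<leftarrow>L. (2 * C * e1 * \<Sigma>) * (\<bar>d\<bar> * norm (b - x)))"
    proof (rule abs_sum_list_le)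
      fix p assume p: "p \<in> set L"
      obtain b d where pbd: "p = (b,d)" by force
      have bS: "b \<in> S" using inb p pbd by (auto simp: S_def)
      have "\<bar>d * (G b - G x - G' x (b - x))\<bar> \<le> \<bar>d\<bar> * (norm (b - x) * (2 * C * e1 * \<Sigma>))"
        unfolding abs_mult by (intro mult_left_mono Rb[OF bS]) auto
      then show "\<bar>case p of (b,d) \<Rightarrow> d * (G b - G x - G' x (b - x))\<bar> \<le> (case p of (b,d) \<Rightarrow> (2 * C * e1 * \<Sigma>) * (\<bar>d\<bar> * norm (b - x)))"
        by (simp add: pbd algebra_simps)
    qed
    also have "\<dots> = (2 * C * e1) * \<Sigma>^2" unfolding \<Sigma>_def
      by (simp add: sum_list_const_mult split_def power2_eq_square)
    also have "\<dots> = e * \<Sigma>^2" using C by (simp add: e1_def)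
    finally show "kip K (fam w L) (fam w L) \<le> e * (\<Sum>(a,c)\<leftarrow>L. \<bar>c\<bar> * norm (a - x))^2"
      using kipG by (simp add: \<Sigma>_def)
  qed
qed


definition Lv :: "real^'n \<Rightarrow> real^'n \<Rightarrow> real^'n \<Rightarrow> real^'n \<Rightarrow> real^'n" where
  "Lv x v w = (\<lambda>z. D (z,x) (0,v) *v w)"

definition Qf :: "real^'n \<Rightarrow> real^'n \<Rightarrow> real^'n \<Rightarrow> real \<Rightarrow> ((real^'n) \<times> (real^'n)) list" where
  "Qf x v w \<tau> = fam w [(x + \<tau> *\<^sub>R v, 1/\<tau>), (x, -(1/\<tau>))]"

lemma dq_approx:
  assumes x: "x \<in> X" and tpos: "\<And>k. t k > 0" and t0: "t \<longlonglongrightarrow> 0" and tX: "\<And>k. x + t k *\<^sub>R v \<in> X"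
  shows "approxU (Lv x v w) (\<lambda>k. kfun K (Qf x v w (t k)))"
  unfolding approxU_def
proof (intro conjI ballI)
  have iQ: "inX (Qf x v w (t k))" for k using x tX by (simp add: Qf_def)
  show "P.cauchyS (\<lambda>k. kfun K (Qf x v w (t k)))" unfolding P.cauchyS_def
  proof (intro conjI allI impI)
    show "kfun K (Qf x v w (t k)) \<in> {u. inP u}" for k using iQ by (simp add: inP_kfun)
    fix e :: real assume e: "e > 0"
    define e' where "e' = e / (4 * (norm v)^2 + 1)"
    have e': "e' > 0" using e by (simp add: e'_def add_nonneg_pos)
    obtain \<delta> where \<delta>: "\<delta> > 0" and fb: "\<And>L. (\<Sum>(a,c)\<leftarrow>L. c) = 0 \<Longrightarrow> (\<Sum>(a,c)\<leftarrow>L. c *\<^sub>R (a - x)) = 0 \<Longrightarrow>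
           (\<forall>(a,c)\<in>set L. a \<in> ball x \<delta>) \<Longrightarrow> kip K (fam w L) (fam w L) \<le> e' * (\<Sum>(a,c)\<leftarrow>L. \<bar>c\<bar> * norm (a - x))^2"
      using fam_bound[OF x e', of w] by blast
    have d': "\<delta> / (norm v + 1) > 0" using \<delta> by (simp add: add_nonneg_pos)
    obtain N where N: "\<And>k. k \<ge> N \<Longrightarrow> norm (t k) < \<delta> / (norm v + 1)" using LIMSEQ_D[OF t0 d'] by auto
    have tb: "x + t k *\<^sub>R v \<in> ball x \<delta>" if "k \<ge> N" for k
    proof -
      have "t k < \<delta> / (norm v + 1)" using N[OF that] tpos[of k] by simp
      then have "t k * (norm v + 1) < \<delta>" by (simp add: pos_less_divide_eq add_nonneg_pos)
      moreover have "t k * norm v \<le> t k * (norm v + 1)" using tpos[of k] by simp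
      ultimately have "t k * norm v < \<delta>" by linarith
      then show ?thesis using tpos[of k] by (simp add: dist_norm)
    qed
    show "\<exists>N. \<forall>k\<ge>N. \<forall>l\<ge>N. ipP (kfun K (Qf x v w (t k)) - kfun K (Qf x v w (t l))) (kfun K (Qf x v w (t k)) - kfun K (Qf x v w (t l))) < e"
    proof (intro exI[of _ N] allI impI)
      fix k l assume k: "N \<le> k" and l: "N \<le> l"
      define L where "L = [(x + t k *\<^sub>R v, 1/t k), (x, -(1/t k)), (x + t l *\<^sub>R v, -(1/t l)), (x, -(-(1/t l)))]"
      have fd: "fam_diff (Qf x v w (t k)) (Qf x v w (t l)) = fam w L"
        by (simp add: Qf_def L_def fam_diff_def)
      have tk: "t k \<noteq> 0" "t l \<noteq> 0" using tpos[of k] tpos[of l] by auto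
      have "ipP (kfun K (Qf x v w (t k)) - kfun K (Qf x v w (t l))) (kfun K (Qf x v w (t k)) - kfun K (Qf x v w (t l)))
          = kip K (fam w L) (fam w L)" using iQ by (simp add: ipP_diff_kfun fd)
      also have "\<dots> \<le> e' * (\<Sum>(a,c)\<leftarrow>L. \<bar>c\<bar> * norm (a - x))^2"
      proof (rule fb)
        show "(\<Sum>(a,c)\<leftarrow>L. c) = 0" by (simp add: L_def)
        show "(\<Sum>(a,c)\<leftarrow>L. c *\<^sub>R (a - x)) = 0" using tk by (simp add: L_def)
        show "\<forall>(a,c)\<in>set L. a \<in> ball x \<delta>" using tb[OF k] tb[OF l] \<delta> by (auto simp: L_def)
      qed
      also have "(\<Sum>(a,c)\<leftarrow>L. \<bar>c\<bar> * norm (a - x)) = 2 * norm v"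
        using tpos[of k] tpos[of l] by (simp add: L_def)
      also have "e' * (2 * norm v)^2 = e * (4 * (norm v)^2 / (4 * (norm v)^2 + 1))"
        by (simp add: e'_def power_mult_distrib)
      also have "\<dots> < e * 1"
      proof (rule mult_strict_left_mono[OF _ e])
        show "4 * (norm v)^2 / (4 * (norm v)^2 + 1) < 1" by (subst divide_less_eq_1_pos) (auto simp: add_nonneg_pos)
      qed
      finally show "ipP (kfun K (Qf x v w (t k)) - kfun K (Qf x v w (t l))) (kfun K (Qf x v w (t k)) - kfun K (Qf x v w (t l))) < e"
        by (simp only: mult_1_right)
    qed
  qed
next
  fix z assume z: "z \<in> X"
  have g: "((\<lambda>s. K z s *v w) has_derivative (\<lambda>\<beta>. D (z,x) (0,\<beta>) *v w)) (at x)"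
    by (rule bounded_linear.has_derivative[OF mv_bl dK_s[OF z x]])
  have tnz: "\<And>k. t k \<noteq> 0" using tpos by (metis less_irrefl)
  have "(\<lambda>k. (1 / t k) *\<^sub>R (K z (x + t k *\<^sub>R v) *v w - K z x *v w)) \<longlonglongrightarrow> D (z,x) (0,v) *v w"
    using dq_lim[OF g t0 tnz] by simp
  moreover have "kfun K (Qf x v w (t k)) z = (1 / t k) *\<^sub>R (K z (x + t k *\<^sub>R v) *v w - K z x *v w)" for k
    by (simp add: Qf_def matrix_vector_mult_scaleR scaleR_diff_right mv_neg)
  ultimately show "(\<lambda>k. kfun K (Qf x v w (t k)) z) \<longlonglongrightarrow> Lv x v w z" by (simp add: Lv_def)
qed

lemma frechet_K: "z \<in> X \<Longrightarrow> x \<in> X \<Longrightarrow> frechet_derivative (\<lambda>s. K z s) (at x) = (\<lambda>\<beta>. D (z,x) (0,\<beta>))"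
  using frechet_derivative_at[OF dK_s] by metis

lemma dK_eq: "x \<in> X \<Longrightarrow> z \<in> X \<Longrightarrow> dK K p x w z = Lv x (axis p 1) w z"
  by (simp add: dK_def Lv_def frechet_K)

lemma Lv_H: assumes x: "x \<in> X" shows "Lv x v w \<in> rkhs X K"
proof -
  obtain d0 where d0: "d0 > 0" "ball x d0 \<subseteq> X" using openX x by (meson openE)
  define c where "c = d0 / (2 * (norm v + 1))"
  have c: "c > 0" using d0 by (simp add: c_def add_nonneg_pos)
  define t where "t = (\<lambda>k. c * inverse (real (Suc k)))"
  have tpos: "\<And>k. t k > 0" using c by (simp add: t_def)
  have t0: "t \<longlonglongrightarrow> 0" unfolding t_def by (rule tendsto_mult_right_zero[OF LIMSEQ_inverse_real_of_nat])
  have tX: "x + t k *\<^sub>R v \<in> X" for k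
  proof -
    have "t k \<le> c" using c by (simp add: t_def field_simps)
    then have "t k * norm v \<le> c * norm v" by (simp add: mult_right_mono)
    also have "\<dots> \<le> c * (norm v + 1)" using c by simp
    also have "\<dots> = d0 / 2"
    proof -
      have "norm v + 1 > 0" by (simp add: add_nonneg_pos)
      then show ?thesis by (simp add: c_def field_simps)
    qed
    also have "\<dots> < d0" using d0 by simp
    finally have "norm (t k *\<^sub>R v) < d0" using tpos[of k] by simp
    then show ?thesis using d0 by (auto simp: dist_norm)
  qed
  show ?thesis using dq_approx[OF x tpos t0 tX] approxU_H by blast
qed

lemma dK_H: assumes x: "x \<in> X" shows "dK K p x w \<in> rkhs X K"
proof -
  have "dK K p x w \<in> rkhs X K \<longleftrightarrow> Lv x (axis p 1) w \<in> rkhs X K" by (rule H_cong) (simp add: dK_eq[OF x])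
  then show ?thesis using Lv_H[OF x] by simp
qed

lemma Lv_lin: assumes x: "x \<in> X" and z: "z \<in> X"
  shows "Lv x v w z = (\<Sum>p\<in>UNIV. v $ p *\<^sub>R dK K p x w z)"
proof -
  define \<phi> where "\<phi> = (\<lambda>\<beta>. D (z,x) (0,\<beta>) *v w)"
  have "bounded_linear \<phi>" unfolding \<phi>_def
    using bounded_linear.has_derivative[OF mv_bl dK_s[OF z x], of w] has_derivative_bounded_linear by blast
  then have lin: "linear \<phi>" by (rule bounded_linear.linear)
  have "Lv x v w z = \<phi> v" by (simp add: Lv_def \<phi>_def)
  also have "\<dots> = \<phi> (\<Sum>p\<in>UNIV. v $ p *\<^sub>R axis p 1)" using basis_expansion[of v] by (simp add: scalar_mult_eq_scaleR)
  also have "\<dots> = (\<Sum>p\<in>UNIV. v $ p *\<^sub>R \<phi> (axis p 1))" by (simp add: linear_sum[OF lin] linear_scale[OF lin])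
  also have "\<dots> = (\<Sum>p\<in>UNIV. v $ p *\<^sub>R dK K p x w z)" by (simp add: dK_eq[OF x z] Lv_def \<phi>_def)
  finally show ?thesis .
qed


lemma orth_Lv:
  assumes x: "x \<in> X" and h: "h \<in> rkhs X K" and orth: "\<And>p. ipH h (dK K p x w) = 0"
  shows "ipH h (Lv x v w) = 0"
proof -
  define S where "S = (\<Sum>p\<in>UNIV. v $ p *\<^sub>R dK K p x w)"
  have SH: "S \<in> rkhs X K" unfolding S_def by (intro H.Vsum H.Vscale dK_H x) auto
  have "ipH h (Lv x v w) = ipH h S"
    by (rule ipH_cong2[OF h Lv_H[OF x]]) (simp add: S_def sum_fun_apply Lv_lin[OF x])
  also have "\<dots> = (\<Sum>p\<in>UNIV. ipH h (v $ p *\<^sub>R dK K p x w))"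
    unfolding S_def by (rule H.ip_sum2) (auto intro: H.Vscale dK_H x h)
  also have "\<dots> = 0" using h dK_H[OF x] by (simp add: H.ip_scale2 orth)
  finally show ?thesis .
qed

lemma comp_bound:
  assumes x: "x \<in> X" and h: "h \<in> rkhs X K" and hx: "h x = 0"
    and orth: "\<And>v. ipH h (Lv x v w) = 0"
    and \<delta>: "ball x \<delta> \<subseteq> X"
    and fb: "\<And>L. (\<Sum>(a,c)\<leftarrow>L. c) = 0 \<Longrightarrow> (\<Sum>(a,c)\<leftarrow>L. c *\<^sub>R (a - x)) = 0 \<Longrightarrow>
           (\<forall>(a,c)\<in>set L. a \<in> ball x \<delta>) \<Longrightarrow> kip K (fam w L) (fam w L) \<le> e' * (\<Sum>(a,c)\<leftarrow>L. \<bar>c\<bar> * norm (a - x))^2"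
    and e': "e' \<ge> 0"
    and y: "y \<in> ball x \<delta>"
  shows "\<bar>h y \<bullet> w\<bar> \<le> H.nm h * (sqrt e' * (2 * norm (y - x)))"
proof -
  define v where "v = y - x"
  define t where "t = (\<lambda>k. inverse (real (Suc k)))"
  have tpos: "\<And>k. t k > 0" by (simp add: t_def)
  have tle: "\<And>k. t k \<le> 1" by (simp add: t_def inverse_le_1_iff)
  have t0: "t \<longlonglongrightarrow> 0" unfolding t_def by (rule LIMSEQ_inverse_real_of_nat)
  have nv: "norm v < \<delta>" using y by (simp add: v_def dist_norm norm_minus_commute)
  have tb: "x + t k *\<^sub>R v \<in> ball x \<delta>" for k
  proof -
    have "t k * norm v \<le> norm v" using tle[of k] tpos[of k] by (simp add: mult_left_le_one_le)
    then show ?thesis using nv tpos[of k] by (simp add: dist_norm)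
  qed
  have tX: "x + t k *\<^sub>R v \<in> X" for k using tb \<delta> by auto
  have yX: "y \<in> X" using y \<delta> by auto
  have ap: "approxU (Lv x v w) (\<lambda>k. kfun K (Qf x v w (t k)))" by (rule dq_approx[OF x tpos t0 tX])
  have lim: "(\<lambda>k. ipH h (kfun K (Qf x v w (t k)))) \<longlonglongrightarrow> 0"
    using ipH_approx[OF ap h] orth[of v] by simp
  define B where "B = H.nm h * (sqrt e' * (2 * norm v))"
  have bnd: "\<bar>h y \<bullet> w - ipH h (kfun K (Qf x v w (t k)))\<bar> \<le> B" for k
  proof -
    define L where "L = [(y, 1), (x, -1), (x + t k *\<^sub>R v, -(1/t k)), (x, 1/t k)]"
    have iL: "inX (fam w L)" using yX x tX by (simp add: L_def)
    have iQ: "inX (Qf x v w (t k))" using x tX by (simp add: Qf_def)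
    have tnz: "t k \<noteq> 0" using tpos[of k] by simp
    have "ipH h (kfun K (fam w L)) + ipH h (kfun K (Qf x v w (t k))) = h y \<bullet> w"
      using h iL iQ hx tnz by (simp add: ipH_kfun L_def Qf_def inner_add_left inner_diff_left algebra_simps)
    then have eq: "h y \<bullet> w - ipH h (kfun K (Qf x v w (t k))) = ipH h (kfun K (fam w L))" by simp
    have FH: "kfun K (fam w L) \<in> rkhs X K" using iL by (rule H_kfun)
    have "ipH (kfun K (fam w L)) (kfun K (fam w L)) = kip K (fam w L) (fam w L)" by (rule ipH_kfun2[OF iL iL])
    also have "\<dots> \<le> e' * (\<Sum>(a,c)\<leftarrow>L. \<bar>c\<bar> * norm (a - x))^2"
    proof (rule fb)
      show "(\<Sum>(a,c)\<leftarrow>L. c) = 0" by (simp add: L_def)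
      show "(\<Sum>(a,c)\<leftarrow>L. c *\<^sub>R (a - x)) = 0" using tnz by (simp add: L_def v_def)
      have "0 < \<delta>" using nv norm_ge_zero[of v] by linarith
      then show "\<forall>(a,c)\<in>set L. a \<in> ball x \<delta>" using tb[of k] y nv by (auto simp: L_def)
    qed
    also have "(\<Sum>(a,c)\<leftarrow>L. \<bar>c\<bar> * norm (a - x)) = 2 * norm v"
      using tpos[of k] by (simp add: L_def v_def)
    also have "e' * (2 * norm v)^2 = (sqrt e' * (2 * norm v))^2" using e' by (simp add: power_mult_distrib)
    finally have "H.nm (kfun K (fam w L)) \<le> sqrt e' * (2 * norm v)"
      using FH e' by (intro H.ip_le_nm) auto
    then have "\<bar>ipH h (kfun K (fam w L))\<bar> \<le> B"
      using H.CS_abs[OF h FH] H.nm_nonneg[of h] unfolding B_def by (smt (verit) mult_left_mono)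
    then show ?thesis using eq by simp
  qed
  have "(\<lambda>k. \<bar>h y \<bullet> w - ipH h (kfun K (Qf x v w (t k)))\<bar>) \<longlonglongrightarrow> \<bar>h y \<bullet> w - 0\<bar>"
    by (intro tendsto_rabs tendsto_diff tendsto_const lim)
  then have "\<bar>h y \<bullet> w - 0\<bar> \<le> B" by (rule LIMSEQ_le_const2) (use bnd in auto)
  then show ?thesis by (simp add: B_def v_def)
qed

lemma deriv_zero:
  assumes x: "x \<in> X" and h: "h \<in> rkhs X K" and hx: "h x = 0"
    and orth: "\<And>p q. ipH h (dK K p x (axis q 1)) = 0"
  shows "(h has_derivative (\<lambda>_. 0)) (at x)"
  unfolding has_derivative_at_alt
proof (intro conjI allI impI)
  show "bounded_linear (\<lambda>_::real^'n. 0::real^'n)" by (rule bounded_linear_zero)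
  fix e :: real assume e: "e > 0"
  define M where "M = H.nm h"
  define n where "n = real CARD('n)"
  have M0: "M \<ge> 0" by (simp add: M_def H.nm_nonneg)
  have n0: "n > 0" by (simp add: n_def)
  define r where "r = e / (2 * n * (M + 1))"
  have r0: "r > 0" using e n0 M0 by (simp add: r_def add_nonneg_pos)
  define e' where "e' = r^2"
  have e'0: "e' > 0" using r0 by (simp add: e'_def)
  have "\<forall>q. \<exists>\<delta>>0. ball x \<delta> \<subseteq> X \<and> (\<forall>L. (\<Sum>(a,c)\<leftarrow>L. c) = 0 \<longrightarrow> (\<Sum>(a,c)\<leftarrow>L. c *\<^sub>R (a - x)) = 0 \<longrightarrow>
           (\<forall>(a,c)\<in>set L. a \<in> ball x \<delta>) \<longrightarrow>
           kip K (fam (axis q 1) L) (fam (axis q 1) L) \<le> e' * (\<Sum>(a,c)\<leftarrow>L. \<bar>c\<bar> * norm (a - x))^2)"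
    using fam_bound[OF x e'0] by blast
  then obtain \<delta>f where \<delta>f: "\<And>q. \<delta>f q > 0" "\<And>q. ball x (\<delta>f q) \<subseteq> X"
    and fbf: "\<And>q L. (\<Sum>(a,c)\<leftarrow>L. c) = 0 \<Longrightarrow> (\<Sum>(a,c)\<leftarrow>L. c *\<^sub>R (a - x)) = 0 \<Longrightarrow>
           (\<forall>(a,c)\<in>set L. a \<in> ball x (\<delta>f q)) \<Longrightarrow>
           kip K (fam (axis q 1) L) (fam (axis q 1) L) \<le> e' * (\<Sum>(a,c)\<leftarrow>L. \<bar>c\<bar> * norm (a - x))^2"
    by metis
  define \<delta> where "\<delta> = Min (range \<delta>f)"
  have \<delta>0: "\<delta> > 0" unfolding \<delta>_def using \<delta>f(1) by (subst Min_gr_iff) auto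
  have \<delta>le: "\<delta> \<le> \<delta>f q" for q unfolding \<delta>_def by (rule Min_le) auto
  have orthv: "ipH h (Lv x v (axis q 1)) = 0" for v q by (rule orth_Lv[OF x h orth])
  show "\<exists>d>0. \<forall>y. norm (y - x) < d \<longrightarrow> norm (h y - h x - 0) \<le> e * norm (y - x)"
  proof (intro exI[of _ \<delta>] conjI \<delta>0 allI impI)
    fix y assume y: "norm (y - x) < \<delta>"
    have comp: "\<bar>h y $ q\<bar> \<le> M * (r * (2 * norm (y - x)))" for q
    proof -
      have yb: "y \<in> ball x (\<delta>f q)" using y \<delta>le[of q] by (simp add: dist_norm norm_minus_commute)
      have "\<bar>h y \<bullet> axis q 1\<bar> \<le> H.nm h * (sqrt e' * (2 * norm (y - x)))"
        by (rule comp_bound[OF x h hx orthv \<delta>f(2) fbf _ yb]) (use e'0 in auto)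
      moreover have "sqrt e' = r" using r0 by (simp add: e'_def)
      ultimately show ?thesis by (simp add: inner_axis M_def)
    qed
    have "norm (h y - h x - 0) = norm (h y)" using hx by simp
    also have "\<dots> \<le> (\<Sum>q\<in>UNIV. \<bar>h y $ q\<bar>)" by (rule norm_le_l1_cart)
    also have "\<dots> \<le> (\<Sum>q\<in>(UNIV::'n set). M * (r * (2 * norm (y - x))))" by (rule sum_mono) (rule comp)
    also have "\<dots> = n * M * r * 2 * norm (y - x)" by (simp add: n_def)
    also have "n * M * r * 2 = e * (M / (M + 1))"
    proof -
      have d: "2 * n * (M + 1) > 0" using n0 M0 by (simp add: add_nonneg_pos)
      have "M + 1 \<noteq> 0" "n \<noteq> 0" using n0 M0 by auto
      then have re: "r * (2 * n * (M + 1)) = e" by (simp add: r_def)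
      have "n * M * r * 2 = (M / (M + 1)) * (r * (2 * n * (M + 1)))" using M0 by (simp add: field_simps add_nonneg_pos)
      then show ?thesis using re by simp
    qed
    also have "e * (M / (M + 1)) * norm (y - x) \<le> e * norm (y - x)"
    proof -
      have "M / (M + 1) \<le> 1" using M0 by simp
      then have "e * (M / (M + 1)) \<le> e * 1" using e by (intro mult_left_mono) auto
      then show ?thesis by (intro mult_right_mono) auto
    qed
    finally show "norm (h y - h x - 0) \<le> e * norm (y - x)" .
  qed
qed

end



context rk begin

lemma proj_decomp:
  assumes I: "finite I" and r: "\<forall>i\<in>I. r i \<in> rkhs X K" and f: "f \<in> rkhs X K"
  obtains c where "(\<Sum>j\<in>I. c j *\<^sub>R r j) \<in> rkhs X K"
    "\<forall>i\<in>I. ipH (f - (\<Sum>j\<in>I. c j *\<^sub>R r j)) (r i) = 0"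
    "ipH f f = ipH (\<Sum>j\<in>I. c j *\<^sub>R r j) (\<Sum>j\<in>I. c j *\<^sub>R r j) + ipH (f - (\<Sum>j\<in>I. c j *\<^sub>R r j)) (f - (\<Sum>j\<in>I. c j *\<^sub>R r j))"
proof -
  obtain c where c: "\<forall>i\<in>I. ipH (f - (\<Sum>j\<in>I. c j *\<^sub>R r j)) (r i) = 0"
    using H.proj_exists[OF I] r f by blast
  define g where "g = (\<Sum>j\<in>I. c j *\<^sub>R r j)"
  have gH: "g \<in> rkhs X K" unfolding g_def using r by (intro H.Vsum H.Vscale I) auto
  define h where "h = f - g"
  have hH: "h \<in> rkhs X K" unfolding h_def using f gH by (rule H.Vdiff)
  have hg: "ipH h g = 0"
  proof -
    have "ipH h g = (\<Sum>j\<in>I. ipH h (c j *\<^sub>R r j))" unfolding g_def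
      using r hH by (intro H.ip_sum2 I) (auto intro: H.Vscale)
    also have "\<dots> = (\<Sum>j\<in>I. c j * ipH h (r j))" using r hH by (intro sum.cong refl H.ip_scale2) auto
    also have "\<dots> = 0" using c by (simp add: h_def g_def)
    finally show ?thesis .
  qed
  have fe: "f = g + h" by (simp add: h_def)
  have "ipH f f = ipH (g + h) (g + h)" using fe by simp
  also have "\<dots> = ipH g g + ipH h g + (ipH g h + ipH h h)"
    using gH hH by (simp add: H.ip_add H.ip_add2 H.Vadd)
  also have "\<dots> = ipH g g + ipH h h" using hg H.ip_sym[OF gH hH] by simp
  finally have "ipH f f = ipH g g + ipH h h" .
  then show ?thesis using that gH c by (simp add: g_def h_def)
qed

lemma norm_le_imp_eq:
  assumes f: "f \<in> rkhs X K" and g: "g \<in> rkhs X K"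
    and py: "ipH f f = ipH g g + ipH (f - g) (f - g)" and le: "ipH f f \<le> ipH g g" and z: "z \<in> X"
  shows "f z = g z"
proof -
  have dH: "f - g \<in> rkhs X K" using f g by (rule H.Vdiff)
  have "ipH (f - g) (f - g) = 0" using py le H.ip_nonneg[OF dH] by linarith
  then have "(f - g) z = 0" using H_null[OF dH _ z] by blast
  then show ?thesis by simp
qed

end

lemma mv_sum: "(A::real^'n^'m) *v (\<Sum>q\<in>S. c q *\<^sub>R y q) = (\<Sum>q\<in>S. c q *\<^sub>R (A *v y q))"
proof -
  have lin: "linear (\<lambda>v. A *v v)" by simp
  show ?thesis by (simp add: linear_sum[OF lin] linear_scale[OF lin])
qed

lemma dK_sum: "dK K p x (\<Sum>q\<in>S. c q *\<^sub>R y q) z = (\<Sum>q\<in>S. c q *\<^sub>R dK K p x (y q) z)"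
  by (simp add: dK_def mv_sum)

lemma dK_zero: "dK K p x 0 z = 0"
  by (simp add: dK_def)

lemma vec_axis_eq0: "(\<forall>q. (v::real^'n) \<bullet> axis q 1 = 0) \<Longrightarrow> v = 0"
  by (simp add: inner_axis vec_eq_iff)


lemma sum_pair_UNIV: "(\<Sum>pq\<in>(UNIV::('a::finite \<times> 'b::finite) set). G pq) = (\<Sum>p\<in>UNIV. \<Sum>q\<in>UNIV. G (p,q))"
  by (simp add: sum.cartesian_product)

lemma (in rk) partB:
  assumes Xc: "finite Xc" "Xc \<subseteq> X" and b: "b \<in> rkhs X K"
    and opt: "\<And>g. g \<in> rkhs X K \<Longrightarrow> (\<forall>x\<in>Xc. g x = b x) \<Longrightarrow> ipH b b \<le> ipH g g"
  shows "b \<in> Vspace X K Xc"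
proof -
  define I where "I = Xc \<times> (UNIV::'n set)"
  define r where "r = (\<lambda>(x,q). kfun K [(x, axis q (1::real))])"
  have finI: "finite I" using Xc by (simp add: I_def)
  have rH: "\<forall>i\<in>I. r i \<in> rkhs X K" using Xc by (auto simp: I_def r_def intro!: H_kfun)
  obtain c where gH: "(\<Sum>j\<in>I. c j *\<^sub>R r j) \<in> rkhs X K"
    and orth: "\<forall>i\<in>I. ipH (b - (\<Sum>j\<in>I. c j *\<^sub>R r j)) (r i) = 0"
    and py: "ipH b b = ipH (\<Sum>j\<in>I. c j *\<^sub>R r j) (\<Sum>j\<in>I. c j *\<^sub>R r j) + ipH (b - (\<Sum>j\<in>I. c j *\<^sub>R r j)) (b - (\<Sum>j\<in>I. c j *\<^sub>R r j))"
    using proj_decomp[OF finI rH b] by blast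
  define g where "g = (\<Sum>j\<in>I. c j *\<^sub>R r j)"
  have hH: "b - g \<in> rkhs X K" using b gH by (simp add: g_def H.Vdiff)
  have h0: "b x = g x" if x: "x \<in> Xc" for x
  proof -
    have xX: "x \<in> X" using x Xc by auto
    have "(b - g) x \<bullet> axis q 1 = 0" for q
    proof -
      have "ipH (b - g) (r (x,q)) = 0" using orth x by (simp add: I_def g_def)
      then show ?thesis using ipH_single[OF hH xX, of "axis q 1"] by (simp add: r_def)
    qed
    then have "(b - g) x = 0" by (intro vec_axis_eq0 allI)
    then show ?thesis by simp
  qed
  have "ipH b b \<le> ipH g g" using opt[of g] gH h0 by (simp add: g_def)
  then have eq: "b z = g z" if "z \<in> X" for z
    using norm_le_imp_eq[OF b gH[folded g_def] py[folded g_def] _ that] by simp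
  define a where "a = (\<lambda>x. \<Sum>q\<in>UNIV. c (x,q) *\<^sub>R axis q (1::real))"
  show ?thesis unfolding Vspace_def
  proof (intro CollectI exI[of _ a] exI[of _ "\<lambda>x p. 0"] ballI)
    fix z assume z: "z \<in> X"
    have "g z = (\<Sum>j\<in>I. c j *\<^sub>R r j z)" by (simp add: g_def sum_fun_apply)
    also have "\<dots> = (\<Sum>x\<in>Xc. \<Sum>q\<in>UNIV. c (x,q) *\<^sub>R (K z x *v axis q 1))"
      unfolding I_def sum.cartesian_product by (intro sum.cong refl) (auto simp: r_def)
    also have "\<dots> = (\<Sum>x\<in>Xc. K z x *v a x)" by (simp add: a_def mv_sum)
    finally show "b z = (\<Sum>x\<in>Xc. K z x *v a x) + (\<Sum>x\<in>Xc. \<Sum>p\<in>UNIV. dK K p x 0 z)"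
      using eq[OF z] by (simp add: dK_zero)
  qed
qed


lemma (in rk2) partF:
  assumes Xc: "finite Xc" "Xc \<subseteq> X" and f: "f \<in> rkhs X K"
    and opt: "\<And>g. g \<in> rkhs X K \<Longrightarrow> (\<forall>x\<in>Xc. g x = f x \<and> frechet_derivative g (at x) = frechet_derivative f (at x)) \<Longrightarrow> ipH f f \<le> ipH g g"
  shows "f \<in> Vspace X K Xc"
proof -
  define I where "I = (Xc \<times> (UNIV::'n set)) <+> (Xc \<times> (UNIV::('n \<times> 'n) set))"
  define r where "r = case_sum (\<lambda>(x,q). kfun K [(x, axis q (1::real))]) (\<lambda>(x,pq). dK K (fst pq) x (axis (snd pq) (1::real)))"
  have finI: "finite I" using Xc by (simp add: I_def)
  have XcX: "\<And>x. x \<in> Xc \<Longrightarrow> x \<in> X" using Xc by auto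
  have rH: "\<forall>i\<in>I. r i \<in> rkhs X K" by (auto simp: I_def r_def intro!: H_kfun dK_H XcX)
  obtain c where gH: "(\<Sum>j\<in>I. c j *\<^sub>R r j) \<in> rkhs X K"
    and orth: "\<forall>i\<in>I. ipH (f - (\<Sum>j\<in>I. c j *\<^sub>R r j)) (r i) = 0"
    and py: "ipH f f = ipH (\<Sum>j\<in>I. c j *\<^sub>R r j) (\<Sum>j\<in>I. c j *\<^sub>R r j) + ipH (f - (\<Sum>j\<in>I. c j *\<^sub>R r j)) (f - (\<Sum>j\<in>I. c j *\<^sub>R r j))"
    using proj_decomp[OF finI rH f] by blast
  define g where "g = (\<Sum>j\<in>I. c j *\<^sub>R r j)"
  define h where "h = f - g"
  have hH: "h \<in> rkhs X K" using f gH by (simp add: h_def g_def H.Vdiff)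
  have h0: "h x = 0" if x: "x \<in> Xc" for x
  proof -
    have xX: "x \<in> X" using x Xc by auto
    have "h x \<bullet> axis q 1 = 0" for q
    proof -
      have mem: "Inl (x,q) \<in> I" using x unfolding I_def by (intro InlI) simp
      have "ipH h (r (Inl (x,q))) = 0" using bspec[OF orth mem] by (simp add: g_def h_def)
      then show ?thesis using ipH_single[OF hH xX, of "axis q 1"] by (simp add: r_def)
    qed
    then show "h x = 0" by (intro vec_axis_eq0 allI)
  qed
  have hd: "(h has_derivative (\<lambda>_. 0)) (at x)" if x: "x \<in> Xc" for x
  proof (rule deriv_zero)
    show "x \<in> X" using x Xc by auto
    show "h \<in> rkhs X K" by (rule hH)
    show "h x = 0" by (rule h0[OF x])
    fix p q
    have mem: "Inr (x,(p,q)) \<in> I" using x unfolding I_def by (intro InrI) simp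
    have "ipH h (r (Inr (x,(p,q)))) = 0" using bspec[OF orth mem] by (simp add: g_def h_def)
    then show "ipH h (dK K p x (axis q 1)) = 0" by (simp add: r_def)
  qed
  have gfh: "g = (\<lambda>z. f z - h z)" by (simp add: h_def fun_eq_iff)
  have ffh: "f = (\<lambda>z. g z + h z)" by (simp add: h_def fun_eq_iff)
  have fr: "frechet_derivative g (at x) = frechet_derivative f (at x)" if x: "x \<in> Xc" for x
  proof -
    have "(g has_derivative D') (at x) \<longleftrightarrow> (f has_derivative D') (at x)" for D'
    proof
      assume "(g has_derivative D') (at x)"
      from has_derivative_add[OF this hd[OF x]] show "(f has_derivative D') (at x)"
        by (subst ffh) simp
    next
      assume "(f has_derivative D') (at x)"
      from has_derivative_diff[OF this hd[OF x]] show "(g has_derivative D') (at x)"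
        by (subst gfh) simp
    qed
    then show ?thesis unfolding frechet_derivative_def by simp
  qed
  have "ipH f f \<le> ipH g g"
  proof (rule opt)
    show "g \<in> rkhs X K" using gH by (simp add: g_def)
    show "\<forall>x\<in>Xc. g x = f x \<and> frechet_derivative g (at x) = frechet_derivative f (at x)"
      using h0 fr by (simp add: h_def)
  qed
  then have eq: "f z = g z" if "z \<in> X" for z
    using norm_le_imp_eq[OF f gH[folded g_def] py[folded g_def] _ that] by simp
  define a where "a = (\<lambda>x. \<Sum>q\<in>UNIV. c (Inl (x,q)) *\<^sub>R axis q (1::real))"
  define a' where "a' = (\<lambda>x p. \<Sum>q\<in>UNIV. c (Inr (x,(p,q))) *\<^sub>R axis q (1::real))"
  show ?thesis unfolding Vspace_def
  proof (intro CollectI exI[of _ a] exI[of _ a'] ballI)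
    fix z assume z: "z \<in> X"
    have "g z = (\<Sum>j\<in>I. c j *\<^sub>R r j z)" by (simp add: g_def sum_fun_apply)
    also have "\<dots> = (\<Sum>j\<in>Xc \<times> (UNIV::'n set). c (Inl j) *\<^sub>R r (Inl j) z) + (\<Sum>j\<in>Xc \<times> (UNIV::('n \<times> 'n) set). c (Inr j) *\<^sub>R r (Inr j) z)"
      unfolding I_def using Xc by (simp add: sum.Plus comp_def)
    also have "(\<Sum>j\<in>Xc \<times> (UNIV::'n set). c (Inl j) *\<^sub>R r (Inl j) z) = (\<Sum>x\<in>Xc. \<Sum>q\<in>UNIV. c (Inl (x,q)) *\<^sub>R (K z x *v axis q 1))"
      unfolding sum.cartesian_product by (intro sum.cong refl) (auto simp: r_def)
    also have "\<dots> = (\<Sum>x\<in>Xc. K z x *v a x)" by (simp add: a_def mv_sum)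
    also have "(\<Sum>j\<in>Xc \<times> (UNIV::('n \<times> 'n) set). c (Inr j) *\<^sub>R r (Inr j) z) = (\<Sum>x\<in>Xc. \<Sum>pq\<in>(UNIV::('n \<times> 'n) set). c (Inr (x,pq)) *\<^sub>R dK K (fst pq) x (axis (snd pq) 1) z)"
      unfolding sum.cartesian_product by (intro sum.cong refl) (auto simp: r_def)
    also have "\<dots> = (\<Sum>x\<in>Xc. \<Sum>p\<in>UNIV. \<Sum>q\<in>UNIV. c (Inr (x,(p,q))) *\<^sub>R dK K p x (axis q 1) z)"
      by (intro sum.cong refl) (simp add: sum_pair_UNIV)
    also have "\<dots> = (\<Sum>x\<in>Xc. \<Sum>p\<in>UNIV. dK K p x (a' x p) z)" by (simp add: a'_def dK_sum)
    finally show "f z = (\<Sum>x\<in>Xc. K z x *v a x) + (\<Sum>x\<in>Xc. \<Sum>p\<in>UNIV. dK K p x (a' x p) z)"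
      using eq[OF z] by simp
  qed
qed




theorem theorem3:
  fixes X :: "(real, 'n::{finite,linorder}) vec set"
    and Xc :: "((real, 'n) vec) set"
    and N :: nat
    and xs :: "nat \<Rightarrow> (real, 'n) vec" and us :: "nat \<Rightarrow> (real, 'm::finite) vec" and xds :: "nat \<Rightarrow> (real, 'n) vec"
    and Kf KB :: "'n kernel"
    and lam muf mub :: real
    and W :: "(real, 'n) vec \<Rightarrow> ((real, 'n) vec, 'n) vec"
    and fstar :: "(real, 'n) vec \<Rightarrow> (real, 'n) vec" and bstar :: "'m \<Rightarrow> (real, 'n) vec \<Rightarrow> (real, 'n) vec"
  assumes X: "open X" "connected X" "bounded X"
    and m_lt_n: "CARD('m) < CARD('n)"
    and data: "\<forall>i<N. xs i \<in> X"
    and Xc: "finite Xc" "Xc \<subseteq> X" "\<forall>i<N. xs i \<in> Xc"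
    and Kf: "pd_kernel X Kf" "C2_kernel X Kf"
    and KB: "pd_kernel X KB" "C2_kernel X KB"
    and KB_struct: "\<forall>g\<in>rkhs X KB. \<forall>x\<in>X. \<forall>j. first_coord (CARD('n) - CARD('m)) j \<longrightarrow> g x $ j = 0"
    and params: "lam > 0" "muf > 0" "mub > 0"
    and W: "W differentiable_on X" "\<forall>x\<in>X. transpose (W x) = W x"
    and feasible_nonempty: "\<exists>f\<in>rkhs X Kf.
           \<forall>x\<in>Xc. loewner_le (F_lambda (CARD('n) - CARD('m)) lam x f W) 0"
    and opt_mem: "fstar \<in> rkhs X Kf" "\<forall>j. bstar j \<in> rkhs X KB"
    and opt_feas: "\<forall>x\<in>Xc. loewner_le (F_lambda (CARD('n) - CARD('m)) lam x fstar W) 0"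
    and opt_min: "\<forall>f b. f \<in> rkhs X Kf \<longrightarrow> (\<forall>j. b j \<in> rkhs X KB) \<longrightarrow>
           (\<forall>x\<in>Xc. loewner_le (F_lambda (CARD('n) - CARD('m)) lam x f W) 0) \<longrightarrow>
           J_d N xs us xds muf mub X Kf KB fstar bstar \<le> J_d N xs us xds muf mub X Kf KB f b"
  shows "fstar \<in> Vspace X Kf Xc \<and> (\<forall>j. bstar j \<in> Vspace X KB Xc)"
proof -
  obtain D D2 where hD: "\<forall>p\<in>X \<times> X. ((\<lambda>(r,s). Kf r s) has_derivative blinfun_apply (D p)) (at p)"
    and hD2: "\<forall>p\<in>X \<times> X. (D has_derivative blinfun_apply (D2 p)) (at p)"
    and cD2: "continuous_on (X \<times> X) D2"
    using Kf(2) unfolding C2_kernel_def C2_on_def by blast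
  interpret F: rk2 X Kf D D2
    by unfold_locales (use Kf(1) X(1) hD hD2 cD2 in auto)
  interpret B: rk X KB
    by unfold_locales (rule KB(1))
  have dataXc: "\<And>i. i \<in> {..<N} \<Longrightarrow> xs i \<in> Xc" using Xc(3) by auto
  have fV: "fstar \<in> Vspace X Kf Xc"
  proof (rule F.partF[OF Xc(1) Xc(2) opt_mem(1)])
    fix g assume gH: "g \<in> rkhs X Kf"
      and gc: "\<forall>x\<in>Xc. g x = fstar x \<and> frechet_derivative g (at x) = frechet_derivative fstar (at x)"
    have Feq: "F_lambda (CARD('n) - CARD('m)) lam x g W = F_lambda (CARD('n) - CARD('m)) lam x fstar W" if "x \<in> Xc" for x
      using gc that by (simp add: F_lambda_def dir_deriv_mat_def jacobian_def)
    have feas: "\<forall>x\<in>Xc. loewner_le (F_lambda (CARD('n) - CARD('m)) lam x g W) 0"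
      using opt_feas Feq by simp
    have J: "J_d N xs us xds muf mub X Kf KB fstar bstar \<le> J_d N xs us xds muf mub X Kf KB g bstar"
      using opt_min gH opt_mem(2) feas by blast
    have dat: "(\<Sum>i<N. (norm (g (xs i) + (\<Sum>j\<in>UNIV. (us i $ j) *\<^sub>R bstar j (xs i)) - xds i))\<^sup>2)
        = (\<Sum>i<N. (norm (fstar (xs i) + (\<Sum>j\<in>UNIV. (us i $ j) *\<^sub>R bstar j (xs i)) - xds i))\<^sup>2)"
      using gc dataXc by (intro sum.cong refl) auto
    have "muf * rkhs_norm2 X Kf fstar \<le> muf * rkhs_norm2 X Kf g"
      using J dat unfolding J_d_def by simp
    then have "rkhs_norm2 X Kf fstar \<le> rkhs_norm2 X Kf g" using params(2) by simp
    then show "F.ipH fstar fstar \<le> F.ipH g g" using F.norm2_eq opt_mem(1) gH by simp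
  qed
  have bV: "bstar j \<in> Vspace X KB Xc" for j
  proof (rule B.partB[OF Xc(1) Xc(2)])
    show bH: "bstar j \<in> rkhs X KB" using opt_mem(2) by simp
    fix g assume gH: "g \<in> rkhs X KB" and gc: "\<forall>x\<in>Xc. g x = bstar j x"
    define b' where "b' = bstar(j := g)"
    have b'H: "\<forall>j'. b' j' \<in> rkhs X KB" using opt_mem(2) gH by (simp add: b'_def)
    have J: "J_d N xs us xds muf mub X Kf KB fstar bstar \<le> J_d N xs us xds muf mub X Kf KB fstar b'"
      using opt_min opt_mem(1) b'H opt_feas by blast
    have b'x: "b' j' (xs i) = bstar j' (xs i)" if "i \<in> {..<N}" for i j'
      using gc dataXc[OF that] by (simp add: b'_def)
    have dat: "(\<Sum>i<N. (norm (fstar (xs i) + (\<Sum>j\<in>UNIV. (us i $ j) *\<^sub>R b' j (xs i)) - xds i))\<^sup>2)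
        = (\<Sum>i<N. (norm (fstar (xs i) + (\<Sum>j\<in>UNIV. (us i $ j) *\<^sub>R bstar j (xs i)) - xds i))\<^sup>2)"
      using b'x by (intro sum.cong refl) auto
    have sn: "(\<Sum>j'\<in>UNIV. rkhs_norm2 X KB (b' j')) = (\<Sum>j'\<in>UNIV. rkhs_norm2 X KB (bstar j')) + (rkhs_norm2 X KB g - rkhs_norm2 X KB (bstar j))"
    proof -
      have "(\<Sum>j'\<in>UNIV. rkhs_norm2 X KB (b' j')) = (\<Sum>j'\<in>UNIV. rkhs_norm2 X KB (bstar j') + (if j' = j then rkhs_norm2 X KB g - rkhs_norm2 X KB (bstar j) else 0))"
        by (intro sum.cong refl) (simp add: b'_def)
      also have "\<dots> = (\<Sum>j'\<in>UNIV. rkhs_norm2 X KB (bstar j')) + (rkhs_norm2 X KB g - rkhs_norm2 X KB (bstar j))"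
        by (simp add: sum.distrib)
      finally show ?thesis .
    qed
    have "mub * (\<Sum>j'\<in>UNIV. rkhs_norm2 X KB (bstar j')) \<le> mub * ((\<Sum>j'\<in>UNIV. rkhs_norm2 X KB (bstar j')) + (rkhs_norm2 X KB g - rkhs_norm2 X KB (bstar j)))"
      using J dat sn unfolding J_d_def by simp
    then have "0 \<le> mub * (rkhs_norm2 X KB g - rkhs_norm2 X KB (bstar j))" by (simp add: algebra_simps)
    then have "rkhs_norm2 X KB (bstar j) \<le> rkhs_norm2 X KB g" using params(3)
      by (simp add: zero_le_mult_iff)
    then show "B.ipH (bstar j) (bstar j) \<le> B.ipH g g" using B.norm2_eq bH gH by simp
  qed
  show ?thesis using fV bV by blast
qed


end
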